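(* Let $R\neq 0$ and $S$ be $A$-lattices of $V$, and put $V'=KR+KS$. Then \[[R:S]'_A=\begin{cases}0 & \text{if } d_R>d_S,\\ K & \text{if } d_R\le d_S \text{ and } KS\neq KR,\\ \mathfrak m_S\,\mathfrak m_R^{-1}\,D & \text{if } V'=KS=KR,\end{cases}\] where, in the last case, $R=\mathfrak m_R b_{R,0}\oplus\bigoplus_{i=1}^{d_R-1}Ab_{R,i}$ and $S=\mathfrak m_S b_{S,0}\oplus\bigoplus_{i=1}^{d_S-1}Ab_{S,i}$ are decompositions as in the context (with $B_R=(b_{R,i})$, $B_S=(b_{S,i})$ $K$-bases of $V'$), and $D=\det(P)$ where $P=(P_{ij})$ is the matrix defined by $b_{S,j}=\sum_i P_{ij}b_{R,i}$ (i.e. the determinant of $\mathrm{Id}_{V'}$ from the basis $B_S$ to the basis $B_R$). In particular the right-hand side does not depend on the chosen decompositions.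
   Context: Let $K$ be a commutative field, $A\subseteq K$ a Dedekind ring, and $V$ a $K$-vector space. A fractional ideal of $A$ means a nonzero finitely generated $A$-submodule of the fraction field of $A$ (which is a subfield of $K$); for $A$-submodules $X,Y$ of $K$, $XY$ denotes the $A$-submodule generated by all products $xy$. An $A$-lattice of $V$ is a finitely generated $A$-submodule $R$ of $V$ such that the $K$-span $KR$ satisfies $\dim_K KR=\mathrm{rk}_A R$; this common value is denoted $d_R$. Every nonzero $A$-lattice $R$ can be written as $R=\mathfrak m_R b_{R,0}\oplus\bigoplus_{i=1}^{d_R-1}Ab_{R,i}$ with $\mathfrak m_R$ a fractional ideal of $A$ and $(b_{R,0},\dots,b_{R,d_R-1})$ a $K$-basis of $KR$. For $A$-lattices $R\neq 0$ and $S$ of $V$, set $V'=KR+KS$ (a finite-dimensional $K$-space) and define the $A$-index-module \[[R:S]'_A=\{\det(u):\ u\in \mathrm{End}_K(V'),\ u(R)\subseteq S\}\subseteq K.\] *)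

theory Defs
  imports Main "HOL.Vector_Spaces" "HOL-Combinatorics.Permutations"
begin

definition lz_det :: "nat \<Rightarrow> (nat \<Rightarrow> nat \<Rightarrow> 'k::comm_ring_1) \<Rightarrow> 'k" where
  "lz_det n M = (\<Sum>p | p permutes {..<n}. of_int (sign p) * (\<Prod>i<n. M i (p i)))"

definition A_submodule :: "'k set \<Rightarrow> ('k \<Rightarrow> 'v \<Rightarrow> 'v) \<Rightarrow> 'v::ab_group_add set \<Rightarrow> bool" where
  "A_submodule A scale M \<longleftrightarrow> 0 \<in> M \<and> (\<forall>x\<in>M. \<forall>y\<in>M. x + y \<in> M) \<and> (\<forall>a\<in>A. \<forall>x\<in>M. scale a x \<in> M)"

definition A_span :: "'k set \<Rightarrow> ('k \<Rightarrow> 'v \<Rightarrow> 'v) \<Rightarrow> 'v::ab_group_add set \<Rightarrow> 'v set" where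
  "A_span A scale G = {(\<Sum>g\<in>G. scale (c g) g) | c. \<forall>g\<in>G. c g \<in> A}"

definition A_fin_gen :: "'k set \<Rightarrow> ('k \<Rightarrow> 'v \<Rightarrow> 'v) \<Rightarrow> 'v::ab_group_add set \<Rightarrow> bool" where
  "A_fin_gen A scale M \<longleftrightarrow> (\<exists>G. finite G \<and> G \<subseteq> M \<and> M = A_span A scale G)"

definition A_gen :: "'k set \<Rightarrow> ('k \<Rightarrow> 'v \<Rightarrow> 'v) \<Rightarrow> 'v::ab_group_add set \<Rightarrow> 'v set" where
  "A_gen A scale P = \<Inter>{M. A_submodule A scale M \<and> P \<subseteq> M}"

definition A_indep :: "'k::comm_ring_1 set \<Rightarrow> ('k \<Rightarrow> 'v \<Rightarrow> 'v) \<Rightarrow> 'v::ab_group_add set \<Rightarrow> bool" where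
  "A_indep A scale X \<longleftrightarrow> (\<forall>G c. finite G \<longrightarrow> G \<subseteq> X \<longrightarrow> (\<forall>g\<in>G. c g \<in> A) \<longrightarrow>
        (\<Sum>g\<in>G. scale (c g) g) = 0 \<longrightarrow> (\<forall>g\<in>G. c g = 0))"

definition A_rank :: "'k::comm_ring_1 set \<Rightarrow> ('k \<Rightarrow> 'v \<Rightarrow> 'v) \<Rightarrow> 'v::ab_group_add set \<Rightarrow> nat" where
  "A_rank A scale R = Sup {card X | X. X \<subseteq> R \<and> finite X \<and> A_indep A scale X}"

definition is_subring :: "'k::field set \<Rightarrow> bool" where
  "is_subring A \<longleftrightarrow> 0 \<in> A \<and> 1 \<in> A \<and> (\<forall>x\<in>A. \<forall>y\<in>A. x + y \<in> A \<and> x - y \<in> A \<and> x * y \<in> A)"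

definition ring_ideal :: "'k::field set \<Rightarrow> 'k set \<Rightarrow> bool" where
  "ring_ideal A I \<longleftrightarrow> I \<subseteq> A \<and> A_submodule A (*) I"

definition prime_ring_ideal :: "'k::field set \<Rightarrow> 'k set \<Rightarrow> bool" where
  "prime_ring_ideal A P \<longleftrightarrow> ring_ideal A P \<and> P \<noteq> A \<and>
     (\<forall>x\<in>A. \<forall>y\<in>A. x * y \<in> P \<longrightarrow> x \<in> P \<or> y \<in> P)"

definition maximal_ring_ideal :: "'k::field set \<Rightarrow> 'k set \<Rightarrow> bool" where
  "maximal_ring_ideal A P \<longleftrightarrow> ring_ideal A P \<and> P \<noteq> A \<and>
     (\<forall>I. ring_ideal A I \<longrightarrow> P \<subseteq> I \<longrightarrow> I = P \<or> I = A)"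

definition frac_field :: "'k::field set \<Rightarrow> 'k set" where
  "frac_field A = {a / b | a b. a \<in> A \<and> b \<in> A \<and> b \<noteq> 0}"

definition integral_over :: "'k::field set \<Rightarrow> 'k \<Rightarrow> bool" where
  "integral_over A x \<longleftrightarrow> (\<exists>n c. n \<ge> 1 \<and> (\<forall>i<n. c i \<in> A) \<and> x ^ n + (\<Sum>i<n. c i * x ^ i) = 0)"

text \<open>Dedekind ring: noetherian, integrally closed in its fraction field, every nonzero
  prime ideal maximal (an integral domain automatically, being a subring of a field).\<close>
definition dedekind_subring :: "'k::field set \<Rightarrow> bool" where
  "dedekind_subring A \<longleftrightarrow> is_subring A
     \<and> (\<forall>I. ring_ideal A I \<longrightarrow> A_fin_gen A (*) I)
     \<and> (\<forall>x\<in>frac_field A. integral_over A x \<longrightarrow> x \<in> A)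
     \<and> (\<forall>P. prime_ring_ideal A P \<longrightarrow> P \<noteq> {0} \<longrightarrow> maximal_ring_ideal A P)"

definition fractional_ideal :: "'k::field set \<Rightarrow> 'k set \<Rightarrow> bool" where
  "fractional_ideal A M \<longleftrightarrow> M \<noteq> {0} \<and> A_submodule A (*) M \<and> A_fin_gen A (*) M \<and> M \<subseteq> frac_field A"

definition mod_mult :: "'k::field set \<Rightarrow> 'k set \<Rightarrow> 'k set \<Rightarrow> 'k set" where
  "mod_mult A X Y = A_gen A (*) {x * y | x y. x \<in> X \<and> y \<in> Y}"

definition frac_inv :: "'k::field set \<Rightarrow> 'k set \<Rightarrow> 'k set" where
  "frac_inv A M = {x \<in> frac_field A. \<forall>y\<in>M. x * y \<in> A}"

definition A_lattice :: "'k::field set \<Rightarrow> ('k \<Rightarrow> 'v \<Rightarrow> 'v) \<Rightarrow> 'v::ab_group_add set \<Rightarrow> bool" where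
  "A_lattice A scale R \<longleftrightarrow> A_submodule A scale R \<and> A_fin_gen A scale R \<and>
     vector_space.dim scale (module.span scale R) = A_rank A scale R"

definition lat_dim :: "('k::field \<Rightarrow> 'v \<Rightarrow> 'v) \<Rightarrow> 'v::ab_group_add set \<Rightarrow> nat" where
  "lat_dim scale R = vector_space.dim scale (module.span scale R)"

definition indexed_basis :: "('k::field \<Rightarrow> 'v \<Rightarrow> 'v) \<Rightarrow> 'v::ab_group_add set \<Rightarrow> nat \<Rightarrow> (nat \<Rightarrow> 'v) \<Rightarrow> bool" where
  "indexed_basis scale W d b \<longleftrightarrow> inj_on b {..<d} \<and> \<not> module.dependent scale (b ` {..<d})
     \<and> module.span scale (b ` {..<d}) = W"

definition lattice_decomp :: "'k::field set \<Rightarrow> ('k \<Rightarrow> 'v \<Rightarrow> 'v) \<Rightarrow> 'v::ab_group_add set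
    \<Rightarrow> 'k set \<Rightarrow> (nat \<Rightarrow> 'v) \<Rightarrow> bool" where
  "lattice_decomp A scale R m b \<longleftrightarrow> fractional_ideal A m
     \<and> indexed_basis scale (module.span scale R) (lat_dim scale R) b
     \<and> R = {scale x (b 0) + (\<Sum>i\<in>{1..<lat_dim scale R}. scale (a i) (b i)) | x a.
              x \<in> m \<and> (\<forall>i\<in>{1..<lat_dim scale R}. a i \<in> A)}"

definition is_endo :: "('k::field \<Rightarrow> 'v \<Rightarrow> 'v) \<Rightarrow> 'v::ab_group_add set \<Rightarrow> ('v \<Rightarrow> 'v) \<Rightarrow> bool" where
  "is_endo scale W u \<longleftrightarrow> u ` W \<subseteq> W \<and> (\<forall>x\<in>W. \<forall>y\<in>W. u (x + y) = u x + u y)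
     \<and> (\<forall>c. \<forall>x\<in>W. u (scale c x) = scale c (u x))"

definition coord_matrix :: "('k::field \<Rightarrow> 'v \<Rightarrow> 'v) \<Rightarrow> nat \<Rightarrow> (nat \<Rightarrow> 'v::ab_group_add) \<Rightarrow> (nat \<Rightarrow> 'v)
    \<Rightarrow> nat \<Rightarrow> nat \<Rightarrow> 'k" where
  "coord_matrix scale n b v i j = module.representation scale (b ` {..<n}) (v j) (b i)"

text \<open>det(u) for u in End_K(W), computed in some K-basis of W (independent of the choice).\<close>
definition endo_det :: "('k::field \<Rightarrow> 'v \<Rightarrow> 'v) \<Rightarrow> 'v::ab_group_add set \<Rightarrow> ('v \<Rightarrow> 'v) \<Rightarrow> 'k" where
  "endo_det scale W u =
     (let n = vector_space.dim scale W; b = (SOME b. indexed_basis scale W n b)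
      in lz_det n (coord_matrix scale n b (\<lambda>j. u (b j))))"

definition index_module :: "('k::field \<Rightarrow> 'v \<Rightarrow> 'v) \<Rightarrow> 'v::ab_group_add set \<Rightarrow> 'v set \<Rightarrow> 'k set" where
  "index_module scale R S =
     (let V' = {x + y | x y. x \<in> module.span scale R \<and> y \<in> module.span scale S}
      in {endo_det scale V' u | u. is_endo scale V' u \<and> u ` R \<subseteq> S})"

end

theory Submission
  imports Defs "Jordan_Normal_Form.Determinant"
begin


definition mm :: "nat \<Rightarrow> (nat \<Rightarrow> nat \<Rightarrow> 'k::comm_ring_1) \<Rightarrow> (nat \<Rightarrow> nat \<Rightarrow> 'k) \<Rightarrow> nat \<Rightarrow> nat \<Rightarrow> 'k"
  where "mm n M N = (\<lambda>i j. \<Sum>k<n. M i k * N k j)"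

lemma lz_det_jnf: "lz_det n M = det (mat n n (\<lambda>(i,j). M i j))"
proof -
  have "det (mat n n (\<lambda>(i,j). M i j)) = (\<Sum>p\<in>{p. p permutes {0..<n}}. of_int (sign p) * (\<Prod>i=0..<n. (mat n n (\<lambda>(i,j). M i j)) $$ (i, p i)))"
    by (rule det_def') simp
  also have "\<dots> = (\<Sum>p\<in>{p. p permutes {..<n}}. of_int (sign p) * (\<Prod>i<n. M i (p i)))"
    by (intro sum.cong refl arg_cong2[where f="(*)"] prod.cong)
       (auto simp: atLeast0LessThan permutes_in_image)
  finally show ?thesis unfolding lz_det_def by simp
qed

lemma lz_det_mult: "lz_det n (mm n M N) = lz_det n M * lz_det n N"
proof -
  have "mat n n (\<lambda>(i,j). mm n M N i j) = mat n n (\<lambda>(i,j). M i j) * mat n n (\<lambda>(i,j). N i j)"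
    by (rule eq_matI) (auto simp: mm_def scalar_prod_def atLeast0LessThan intro!: sum.cong)
  then show ?thesis unfolding lz_det_jnf by (simp add: det_mult[of _ n])
qed

lemma lz_det_diag: "lz_det n (\<lambda>i j. if i = j then d i else 0) = (\<Prod>i<n. d i)"
proof -
  have "det (mat n n (\<lambda>(i,j). if i = j then d i else 0)) = prod_list (diag_mat (mat n n (\<lambda>(i,j). if i = j then d i else (0::'a))))"
    by (rule det_upper_triangular) (auto simp: upper_triangular_def)
  also have "\<dots> = (\<Prod>i<n. d i)"
    by (simp add: prod_list_diag_prod atLeast0LessThan)
  finally show ?thesis unfolding lz_det_jnf by simp
qed

lemma lz_det_id: "lz_det n (\<lambda>i j. if i = j then 1 else 0) = 1"
  using lz_det_diag[of n "\<lambda>_. 1"] by simp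

lemma mm_diag: "mm n M (\<lambda>i j. if i = j then d i else 0) = (\<lambda>i j. if j < n then M i j * d j else 0)"
  by (auto simp: mm_def fun_eq_iff if_distrib sum.delta' cong: if_cong)

lemma lz_det_cong: "(\<And>i j. i < n \<Longrightarrow> j < n \<Longrightarrow> M i j = N i j) \<Longrightarrow> lz_det n M = lz_det n N"
  unfolding lz_det_def
  apply (intro sum.cong refl arg_cong2[where f="(*)"] prod.cong)
  apply (auto)
  by (metis lessThan_iff permutes_in_image)

lemma lz_det_scale_cols: "lz_det n (\<lambda>i j. M i j * d j) = lz_det n M * (\<Prod>i<n. d i)"
proof -
  have "lz_det n (\<lambda>i j. M i j * d j) = lz_det n (mm n M (\<lambda>i j. if i = j then d i else 0))"
    by (rule lz_det_cong) (simp add: mm_diag)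
  then show ?thesis by (simp add: lz_det_mult lz_det_diag)
qed

lemma lz_det_kernel:
  fixes M :: "nat \<Rightarrow> nat \<Rightarrow> 'k::field"
  assumes "lz_det n M \<noteq> 0" "\<And>i. i < n \<Longrightarrow> (\<Sum>j<n. M i j * v j) = 0" "j < n"
  shows "v j = 0"
proof (rule ccontr)
  assume nz: "v j \<noteq> 0"
  let ?M = "mat n n (\<lambda>(i,j). M i j)"
  let ?v = "vec n v"
  have "?v \<in> carrier_vec n" by simp
  moreover have "?v \<noteq> 0\<^sub>v n" using nz assms(3) by (metis index_vec index_zero_vec(1))
  moreover have "?M *\<^sub>v ?v = 0\<^sub>v n"
    using assms(2) by (intro eq_vecI) (auto simp: mult_mat_vec_def scalar_prod_def atLeast0LessThan)
  ultimately have "\<exists>w. w \<in> carrier_vec n \<and> w \<noteq> 0\<^sub>v n \<and> ?M *\<^sub>v w = 0\<^sub>v n" by blast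
  then have "det ?M = 0"
    using det_0_iff_vec_prod_zero_field[of ?M n] by simp
  with assms(1) show False unfolding lz_det_jnf by simp
qed


lemma Agen_mod: "A_submodule A scale (A_gen A scale P)"
  unfolding A_gen_def A_submodule_def by blast

lemma Agen_sup: "P \<subseteq> A_gen A scale P"
  unfolding A_gen_def by blast

lemma Agen_least: "A_submodule A scale M \<Longrightarrow> P \<subseteq> M \<Longrightarrow> A_gen A scale P \<subseteq> M"
  unfolding A_gen_def by blast

lemma Agen_induct:
  assumes "w \<in> A_gen A scale P" "A_submodule A scale {w. Q w}" "\<And>p. p \<in> P \<Longrightarrow> Q p"
  shows "Q w"
  using Agen_least[OF assms(2), of P] assms(1,3) by blast

lemma Amod_sum: "A_submodule A scale M \<Longrightarrow> (\<And>i. i\<in>I \<Longrightarrow> f i \<in> M) \<Longrightarrow> sum f I \<in> M"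
proof (induction I rule: infinite_finite_induct)
  case (infinite A) then show ?case by (simp add: A_submodule_def)
next
  case empty then show ?case by (simp add: A_submodule_def)
next
  case (insert x F) then show ?case by (simp add: A_submodule_def)
qed

locale subr =
  fixes A :: "'k::field set"
  assumes sub: "is_subring A"
begin

abbreviation Amod :: "'k set \<Rightarrow> bool" where "Amod M \<equiv> A_submodule A (*) M"
abbreviation mul :: "'k set \<Rightarrow> 'k set \<Rightarrow> 'k set" where "mul X Y \<equiv> mod_mult A X Y"
abbreviation F :: "'k set" where "F \<equiv> frac_field A"

lemma A0[simp]: "0 \<in> A" and A1[simp]: "1 \<in> A"
  using sub by (auto simp: is_subring_def)

lemma Aadd: "x \<in> A \<Longrightarrow> y \<in> A \<Longrightarrow> x + y \<in> A"
  and Adiff: "x \<in> A \<Longrightarrow> y \<in> A \<Longrightarrow> x - y \<in> A"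
  and Amult: "x \<in> A \<Longrightarrow> y \<in> A \<Longrightarrow> x * y \<in> A"
  using sub by (auto simp: is_subring_def)

lemma Aneg: "x \<in> A \<Longrightarrow> - x \<in> A"
  using Adiff[of 0 x] by simp

lemma Amod_A: "Amod A"
  by (auto simp: A_submodule_def Aadd Amult)

lemma Amod_neg: "A_submodule A scale M \<Longrightarrow> x \<in> M \<Longrightarrow> (\<And>x. scale (-1) x = - x) \<Longrightarrow> - x \<in> M"
proof -
  assume M: "A_submodule A scale M" and x: "x \<in> M" and h: "\<And>x. scale (-1) x = - x"
  have "-1 \<in> A" using Aneg[OF A1] .
  then have "scale (-1) x \<in> M" using M x unfolding A_submodule_def by blast
  then show "- x \<in> M" using h by simp
qed

lemma Amod_neg': "Amod M \<Longrightarrow> x \<in> M \<Longrightarrow> - x \<in> M"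
  using Amod_neg[of "(*)" M x] by simp

lemma Amod_diff: "Amod M \<Longrightarrow> x \<in> M \<Longrightarrow> y \<in> M \<Longrightarrow> x - y \<in> M"
proof -
  assume M: "Amod M" and x: "x \<in> M" and y: "y \<in> M"
  have "- y \<in> M" using Amod_neg'[OF M y] .
  then have "x + - y \<in> M" using M x unfolding A_submodule_def by blast
  then show "x - y \<in> M" by simp
qed

lemma Amod_closed: "Amod M \<Longrightarrow> 0 \<in> M" "Amod M \<Longrightarrow> x \<in> M \<Longrightarrow> y \<in> M \<Longrightarrow> x + y \<in> M"
  "Amod M \<Longrightarrow> a \<in> A \<Longrightarrow> x \<in> M \<Longrightarrow> a * x \<in> M"
  by (auto simp: A_submodule_def)

lemma Aprod: "(\<And>i. i \<in> I \<Longrightarrow> f i \<in> A) \<Longrightarrow> prod f I \<in> A"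
  by (induction I rule: infinite_finite_induct) (auto simp: Amult)

lemma mult_least: "Amod Z \<Longrightarrow> (\<And>x y. x\<in>X \<Longrightarrow> y\<in>Y \<Longrightarrow> x*y\<in>Z) \<Longrightarrow> mul X Y \<subseteq> Z"
proof -
  assume Z: "Amod Z" and h: "\<And>x y. x\<in>X \<Longrightarrow> y\<in>Y \<Longrightarrow> x*y\<in>Z"
  have "{x * y |x y. x \<in> X \<and> y \<in> Y} \<subseteq> Z" using h by blast
  then show ?thesis unfolding mod_mult_def by (rule Agen_least[OF Z])
qed

lemma mult_in: "x\<in>X \<Longrightarrow> y\<in>Y \<Longrightarrow> x*y \<in> mul X Y"
proof -
  assume "x\<in>X" "y\<in>Y"
  then have "x * y \<in> {x * y |x y. x \<in> X \<and> y \<in> Y}" by blast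
  then show ?thesis unfolding mod_mult_def using Agen_sup[of "{x * y |x y. x \<in> X \<and> y \<in> Y}" A "(*)"] by blast
qed

lemma mult_mod: "Amod (mul X Y)"
  unfolding mod_mult_def by (rule Agen_mod)

lemma mult_induct:
  assumes "w \<in> mul X Y" "Amod {w. Q w}" "\<And>x y. x\<in>X \<Longrightarrow> y\<in>Y \<Longrightarrow> Q (x*y)"
  shows "Q w"
  by (rule Agen_induct[OF assms(1)[unfolded mod_mult_def] assms(2)]) (use assms(3) in auto)

lemma mult_comm: "mul X Y = mul Y X"
proof -
  have "{x * y |x y. x \<in> X \<and> y \<in> Y} = {x * y |x y. x \<in> Y \<and> y \<in> X}"
    by (auto; metis mult.commute)
  then show ?thesis unfolding mod_mult_def by simp
qed

lemma mult_mono: "X \<subseteq> X' \<Longrightarrow> Y \<subseteq> Y' \<Longrightarrow> mul X Y \<subseteq> mul X' Y'"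
  by (rule mult_least[OF mult_mod]) (auto intro: mult_in)

lemma mult_assoc1: "mul (mul X Y) Z \<subseteq> mul X (mul Y Z)"
proof (rule mult_least[OF mult_mod])
  fix w z assume w: "w \<in> mul X Y" and z: "z \<in> Z"
  show "w * z \<in> mul X (mul Y Z)"
  proof (rule mult_induct[OF w, where Q="\<lambda>w. w * z \<in> mul X (mul Y Z)"])
    show "Amod {w. w * z \<in> mul X (mul Y Z)}"
      using mult_mod[of X "mul Y Z"] by (auto simp: A_submodule_def distrib_right mult.assoc)
    fix x y assume "x \<in> X" "y \<in> Y"
    then show "x * y * z \<in> mul X (mul Y Z)"
      using z by (simp add: mult.assoc mult_in)
  qed
qed

lemma mult_assoc: "mul (mul X Y) Z = mul X (mul Y Z)"
proof
  show "mul (mul X Y) Z \<subseteq> mul X (mul Y Z)" by (rule mult_assoc1)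
  have "mul X (mul Y Z) = mul (mul Z Y) X" by (simp add: mult_comm)
  also have "\<dots> \<subseteq> mul Z (mul Y X)" by (rule mult_assoc1)
  also have "\<dots> = mul (mul X Y) Z" by (simp add: mult_comm)
  finally show "mul X (mul Y Z) \<subseteq> mul (mul X Y) Z" .
qed

lemma mult_A: "Amod M \<Longrightarrow> mul A M = M"
proof
  assume M: "Amod M"
  show "mul A M \<subseteq> M" by (rule mult_least[OF M]) (use M in \<open>auto simp: A_submodule_def\<close>)
  show "M \<subseteq> mul A M" using mult_in[of 1 A] by force
qed

lemma Amod_image_scale: assumes "Amod M" shows "Amod ((*) d ` M)"
  unfolding A_submodule_def
proof (intro conjI ballI)
  show "0 \<in> (*) d ` M" using assms by (auto simp: A_submodule_def intro: image_eqI[of 0 _ 0])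
  fix x y assume "x \<in> (*) d ` M" "y \<in> (*) d ` M"
  then obtain x' y' where "x' \<in> M" "y' \<in> M" "x = d * x'" "y = d * y'" by auto
  then show "x + y \<in> (*) d ` M" using assms
    by (auto simp: A_submodule_def distrib_left[symmetric] intro!: imageI)
next
  fix a x assume "a \<in> A" "x \<in> (*) d ` M"
  then obtain x' where "x' \<in> M" "x = d * x'" by auto
  then show "a * x \<in> (*) d ` M" using assms \<open>a \<in> A\<close>
    by (auto simp: A_submodule_def mult.left_commute[of a d] intro!: imageI)
qed

lemma mult_scale: "mul ((*) d ` X) Y = (*) d ` mul X Y"
proof
  show "mul ((*) d ` X) Y \<subseteq> (*) d ` mul X Y"
    by (rule mult_least[OF Amod_image_scale[OF mult_mod]])
       (auto simp: mult.assoc intro!: imageI mult_in)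
  show "(*) d ` mul X Y \<subseteq> mul ((*) d ` X) Y"
  proof
    fix z assume "z \<in> (*) d ` mul X Y"
    then obtain w where w: "w \<in> mul X Y" and z: "z = d * w" by auto
    have "d * w \<in> mul ((*) d ` X) Y"
    proof (rule mult_induct[OF w, where Q="\<lambda>w. d * w \<in> mul ((*) d ` X) Y"])
      show "Amod {w. d * w \<in> mul ((*) d ` X) Y}"
        using mult_mod[of "(*) d ` X" Y]
        by (auto simp: A_submodule_def distrib_left mult.left_commute[of d])
      fix x y assume "x \<in> X" "y \<in> Y"
      then show "d * (x * y) \<in> mul ((*) d ` X) Y"
        by (metis imageI mult.assoc mult_in)
    qed
    then show "z \<in> mul ((*) d ` X) Y" using z by simp
  qed
qed

lemma F_A: "x \<in> A \<Longrightarrow> x \<in> F"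
  unfolding frac_field_def by (rule CollectI, rule exI[of _ x], rule exI[of _ 1]) simp

lemma F_cases: assumes "x \<in> F" obtains a b where "a \<in> A" "b \<in> A" "b \<noteq> 0" "x = a / b"
  using assms unfolding frac_field_def by auto

lemma F_intro: "a \<in> A \<Longrightarrow> b \<in> A \<Longrightarrow> b \<noteq> 0 \<Longrightarrow> a / b \<in> F"
  unfolding frac_field_def by auto

lemma F_add: "x \<in> F \<Longrightarrow> y \<in> F \<Longrightarrow> x + y \<in> F"
proof -
  assume "x \<in> F" "y \<in> F"
  obtain a b where ab: "a \<in> A" "b \<in> A" "b \<noteq> 0" "x = a / b" using F_cases[OF \<open>x \<in> F\<close>] by blast
  obtain c d where cd: "c \<in> A" "d \<in> A" "d \<noteq> 0" "y = c / d" using F_cases[OF \<open>y \<in> F\<close>] by blast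
  have "x + y = (a * d + c * b) / (b * d)" using ab cd by (simp add: add_frac_eq mult.commute)
  moreover have "(a * d + c * b) / (b * d) \<in> F" using ab cd by (intro F_intro Aadd Amult) auto
  ultimately show "x + y \<in> F" by simp
qed

lemma F_mult: "x \<in> F \<Longrightarrow> y \<in> F \<Longrightarrow> x * y \<in> F"
proof -
  assume "x \<in> F" "y \<in> F"
  obtain a b where ab: "a \<in> A" "b \<in> A" "b \<noteq> 0" "x = a / b" using F_cases[OF \<open>x \<in> F\<close>] by blast
  obtain c d where cd: "c \<in> A" "d \<in> A" "d \<noteq> 0" "y = c / d" using F_cases[OF \<open>y \<in> F\<close>] by blast
  have "x * y = (a * c) / (b * d)" using ab cd by simp
  moreover have "(a * c) / (b * d) \<in> F" using ab cd by (intro F_intro Amult) auto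
  ultimately show "x * y \<in> F" by simp
qed

lemma F_inv: "x \<in> F \<Longrightarrow> inverse x \<in> F"
proof -
  assume "x \<in> F"
  obtain a b where ab: "a \<in> A" "b \<in> A" "b \<noteq> 0" "x = a / b" using F_cases[OF \<open>x \<in> F\<close>] by blast
  show "inverse x \<in> F"
  proof (cases "a = 0")
    case True then show ?thesis using ab F_A[of 0] by simp
  next
    case False
    have "inverse x = b / a" using ab by simp
    then show ?thesis using F_intro[of b a] ab False by simp
  qed
qed

lemma F_div: "x \<in> F \<Longrightarrow> y \<in> F \<Longrightarrow> x / y \<in> F"
  by (simp add: divide_inverse F_mult F_inv)

lemma F_neg: "x \<in> F \<Longrightarrow> - x \<in> F"
  using F_mult[of "-1" x] F_A[of "-1"] Aneg[of 1] by simp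

lemma Amod_F: "Amod F"
  unfolding A_submodule_def using F_add F_mult F_A by auto

lemma mult_sub_A: "A_submodule A (*) M \<Longrightarrow> (\<And>x y. x \<in> X \<Longrightarrow> y \<in> Y \<Longrightarrow> x * y \<in> M) \<Longrightarrow> mul X Y \<subseteq> M"
  by (rule mult_least)

end


lemma Aspan_least:
  assumes "A_submodule A scale M" "G \<subseteq> M"
  shows "A_span A scale G \<subseteq> M"
proof
  fix x assume "x \<in> A_span A scale G"
  then obtain c where x: "x = (\<Sum>g\<in>G. scale (c g) g)" and c: "\<forall>g\<in>G. c g \<in> A"
    unfolding A_span_def by blast
  have "\<And>g. g \<in> G \<Longrightarrow> scale (c g) g \<in> M"
    using assms c unfolding A_submodule_def by blast
  then show "x \<in> M" unfolding x by (rule Amod_sum[OF assms(1)])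
qed

context subr begin

abbreviation ideal :: "'k set \<Rightarrow> bool" where "ideal I \<equiv> ring_ideal A I"

lemma ideal_A: "ideal A"
  unfolding ring_ideal_def using Amod_A by simp

lemma idealD: "ideal I \<Longrightarrow> I \<subseteq> A" "ideal I \<Longrightarrow> Amod I"
  unfolding ring_ideal_def by auto

lemma ideal_mul: "ideal I \<Longrightarrow> ideal J \<Longrightarrow> ideal (mul I J)"
proof -
  assume I: "ideal I" and J: "ideal J"
  have "mul I J \<subseteq> A"
    by (rule mult_least[OF Amod_A]) (use I J idealD in \<open>blast intro: Amult\<close>)
  then show ?thesis unfolding ring_ideal_def using mult_mod by simp
qed

definition idrel :: "('k set \<times> 'k set) set" where
  "idrel = {(J, I). ideal I \<and> ideal J \<and> I \<subset> J}"

primrec prodl :: "'k set list \<Rightarrow> 'k set" where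
  "prodl [] = A"
| "prodl (P # Ps) = mul P (prodl Ps)"

lemma prodl_mod: "Amod (prodl Ps)"
  by (cases Ps) (simp_all add: Amod_A mult_mod)

lemma prodl_append: "prodl (Ps @ Qs) = mul (prodl Ps) (prodl Qs)"
proof (induction Ps)
  case Nil then show ?case by (simp add: mult_A prodl_mod)
next
  case (Cons P Ps) then show ?case by (simp add: mult_assoc)
qed

lemma prodl_ideal: "(\<And>Q. Q \<in> set Ps \<Longrightarrow> ideal Q) \<Longrightarrow> ideal (prodl Ps)"
  by (induction Ps) (simp_all add: ideal_A ideal_mul)

lemma prodl_remove: "Q \<in> set Ps \<Longrightarrow> prodl Ps = mul Q (prodl (remove1 Q Ps))"
proof (induction Ps)
  case Nil then show ?case by simp
next
  case (Cons P Ps)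
  show ?case
  proof (cases "P = Q")
    case True then show ?thesis by simp
  next
    case False
    then have "Q \<in> set Ps" using Cons.prems by simp
    then have "prodl (P # Ps) = mul P (mul Q (prodl (remove1 Q Ps)))" using Cons.IH by simp
    also have "\<dots> = mul Q (mul P (prodl (remove1 Q Ps)))"
      by (simp only: mult_assoc[symmetric] mult_comm[of P Q])
    finally show ?thesis using False by simp
  qed
qed

lemma prodl_prime:
  assumes "prime_ring_ideal A P" "\<And>Q. Q \<in> set Ps \<Longrightarrow> ideal Q" "prodl Ps \<subseteq> P"
  shows "\<exists>Q\<in>set Ps. Q \<subseteq> P"
  using assms(2,3)
proof (induction Ps)
  case Nil
  then have "A \<subseteq> P" by simp
  moreover have "P \<subseteq> A" "P \<noteq> A" using assms(1) unfolding prime_ring_ideal_def ring_ideal_def by auto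
  ultimately show ?case by blast
next
  case (Cons Q Ps)
  show ?case
  proof (cases "Q \<subseteq> P")
    case True then show ?thesis by simp
  next
    case False
    then obtain q where q: "q \<in> Q" "q \<notin> P" by blast
    have qA: "q \<in> A" using q Cons.prems(1) idealD by auto
    have "prodl Ps \<subseteq> P"
    proof
      fix t assume t: "t \<in> prodl Ps"
      have tA: "t \<in> A" using t prodl_ideal[of Ps] Cons.prems(1) idealD by auto
      have "q * t \<in> P" using Cons.prems(2) mult_in[OF q(1) t] by auto
      then show "t \<in> P" using assms(1) q qA tA unfolding prime_ring_ideal_def by blast
    qed
    then show ?thesis using Cons.IH Cons.prems(1) by auto
  qed
qed

lemma max_prime:
  assumes "maximal_ring_ideal A P"
  shows "prime_ring_ideal A P"
proof -
  have P: "ideal P" "P \<noteq> A" using assms unfolding maximal_ring_ideal_def by auto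
  have PA: "P \<subseteq> A" and Pm: "Amod P" using idealD[OF P(1)] by auto
  have P0: "0 \<in> P" and Padd: "\<And>u v. u \<in> P \<Longrightarrow> v \<in> P \<Longrightarrow> u + v \<in> P"
    and Pmul: "\<And>a u. a \<in> A \<Longrightarrow> u \<in> P \<Longrightarrow> a * u \<in> P"
    using Pm unfolding A_submodule_def by auto
  have "y \<in> P \<or> x \<in> P" if xy: "x \<in> A" "y \<in> A" "x * y \<in> P" for x y
  proof (rule disjCI)
    assume xP: "x \<notin> P"
    define J where "J = {p + a * x | p a. p \<in> P \<and> a \<in> A}"
    have JA: "J \<subseteq> A"
    proof
      fix u assume "u \<in> J"
      then obtain p a where "u = p + a * x" "p \<in> P" "a \<in> A" unfolding J_def by blast
      then show "u \<in> A" using PA xy by (simp add: Aadd Amult subsetD)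
    qed
    have J0: "0 \<in> J" unfolding J_def using P0 A0 by (metis (mono_tags, lifting) CollectI add_0 mult_zero_left)
    have Jadd: "u + v \<in> J" if uv: "u \<in> J" "v \<in> J" for u v
    proof -
      obtain p a p' a' where h: "u = p + a * x" "v = p' + a' * x" "p \<in> P" "a \<in> A" "p' \<in> P" "a' \<in> A"
        using uv unfolding J_def by blast
      have "u + v = (p + p') + (a + a') * x" using h by (simp add: algebra_simps)
      moreover have "p + p' \<in> P" "a + a' \<in> A" using h Padd Aadd by auto
      ultimately show ?thesis unfolding J_def by blast
    qed
    have Jmul: "b * u \<in> J" if bu: "b \<in> A" "u \<in> J" for b u
    proof -
      obtain p a where h: "u = p + a * x" "p \<in> P" "a \<in> A" using bu unfolding J_def by blast
      have "b * u = b * p + (b * a) * x" using h by (simp add: algebra_simps)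
      moreover have "b * p \<in> P" "b * a \<in> A" using h bu Pmul Amult by auto
      ultimately show ?thesis unfolding J_def by blast
    qed
    have "ideal J" unfolding ring_ideal_def A_submodule_def using JA J0 Jadd Jmul by blast
    have "P \<subseteq> J"
    proof
      fix p assume "p \<in> P"
      then have "p + 0 * x \<in> J" unfolding J_def using A0 by blast
      then show "p \<in> J" by simp
    qed
    have "0 + 1 * x \<in> J" unfolding J_def using P0 A1 by blast
    then have "x \<in> J" by simp
    then have "J \<noteq> P" using xP by blast
    then have "J = A" using assms \<open>ideal J\<close> \<open>P \<subseteq> J\<close> unfolding maximal_ring_ideal_def by blast
    then have "1 \<in> J" by simp
    then obtain p a where pa: "1 = p + a * x" "p \<in> P" "a \<in> A" unfolding J_def by blast
    have "y = y * (p + a * x)" using pa(1) by simp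
    also have "\<dots> = y * p + a * (x * y)" by (simp add: algebra_simps)
    finally have ye: "y = y * p + a * (x * y)" .
    have "y * p \<in> P" using Pmul pa xy by blast
    moreover have "a * (x * y) \<in> P" using Pmul pa xy by blast
    ultimately show "y \<in> P" using Padd ye by metis
  qed
  then show ?thesis using P unfolding prime_ring_ideal_def by blast
qed

end

locale ded = subr +
  assumes ded: "dedekind_subring A"
begin

lemma ded_parts1: "\<forall>I. ring_ideal A I \<longrightarrow> A_fin_gen A (*) I"
  using ded[unfolded dedekind_subring_def] by (elim conjE) assumption
lemma ded_parts2: "\<forall>x\<in>F. integral_over A x \<longrightarrow> x \<in> A"
  using ded[unfolded dedekind_subring_def] by (elim conjE) assumption
lemma ded_parts3: "\<forall>P. prime_ring_ideal A P \<longrightarrow> P \<noteq> {0} \<longrightarrow> maximal_ring_ideal A P"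
  using ded[unfolded dedekind_subring_def] by (elim conjE) assumption

lemma noeth: "ideal I \<Longrightarrow> A_fin_gen A (*) I"
  using ded_parts1 by simp

lemma intclosed: "x \<in> F \<Longrightarrow> integral_over A x \<Longrightarrow> x \<in> A"
  using ded_parts2 by simp

lemma prime_max: "prime_ring_ideal A P \<Longrightarrow> P \<noteq> {0} \<Longrightarrow> maximal_ring_ideal A P"
  using ded_parts3 by simp

lemma wf_idrel: "wf idrel"
proof (rule wf_iff_no_infinite_down_chain[THEN iffD2], rule notI)
  assume "\<exists>f. \<forall>i. (f (Suc i), f i) \<in> idrel"
  then obtain f where f: "\<And>i. (f (Suc i), f i) \<in> idrel" by blast
  have fid: "ideal (f i)" for i using f[of i] unfolding idrel_def by auto
  have fstrict: "f i \<subset> f (Suc i)" for i using f[of i] unfolding idrel_def by auto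
  have fmono: "i \<le> j \<Longrightarrow> f i \<subseteq> f j" for i j
    using lift_Suc_mono_le[of f i j] fstrict by auto
  define U where "U = (\<Union>i. f i)"
  have "ideal U"
    unfolding ring_ideal_def A_submodule_def
  proof (intro conjI ballI)
    show "U \<subseteq> A" unfolding U_def using idealD(1)[OF fid] by blast
    show "0 \<in> U" unfolding U_def using Amod_closed(1)[OF idealD(2)[OF fid[of 0]]] by blast
    fix x y assume "x \<in> U" "y \<in> U"
    then obtain i j where "x \<in> f i" "y \<in> f j" unfolding U_def by blast
    then have "x \<in> f (max i j)" "y \<in> f (max i j)" using fmono[of i "max i j"] fmono[of j "max i j"] by auto
    then have "x + y \<in> f (max i j)" using Amod_closed(2)[OF idealD(2)[OF fid]] by blast
    then show "x + y \<in> U" unfolding U_def by blast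
  next
    fix a x assume "a \<in> A" "x \<in> U"
    then obtain i where "x \<in> f i" unfolding U_def by blast
    then have "a * x \<in> f i" using Amod_closed(3)[OF idealD(2)[OF fid] \<open>a \<in> A\<close>] by blast
    then show "a * x \<in> U" unfolding U_def by blast
  qed
  then obtain G where G: "finite G" "G \<subseteq> U" "U = A_span A (*) G"
    using noeth[OF \<open>ideal U\<close>] unfolding A_fin_gen_def by blast
  have "\<forall>g\<in>G. \<exists>i. g \<in> f i" using G(2) unfolding U_def by blast
  then obtain h where h: "\<forall>g\<in>G. g \<in> f (h g)" by (rule bchoice[elim_format]) blast
  define N where "N = Max (insert 0 (h ` G))"
  have "G \<subseteq> f N"
  proof
    fix g assume "g \<in> G"
    then have "h g \<le> N" unfolding N_def using G(1) by simp
    then show "g \<in> f N" using h \<open>g \<in> G\<close> fmono[of "h g" N] by blast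
  qed
  moreover have "A_submodule A (*) (f N)" using idealD(2)[OF fid[of N]] .
  ultimately have "U \<subseteq> f N" unfolding G(3) using Aspan_least by blast
  moreover have "f (Suc N) \<subseteq> U" unfolding U_def by blast
  ultimately show False using fstrict[of N] by blast
qed

lemma exists_max:
  assumes "ideal I" "I \<noteq> A"
  shows "\<exists>P. maximal_ring_ideal A P \<and> I \<subseteq> P"
proof -
  define Q where "Q = {J. ideal J \<and> I \<subseteq> J \<and> J \<noteq> A}"
  have "I \<in> Q" using assms unfolding Q_def by blast
  obtain z where z: "z \<in> Q" and zmin: "\<And>y. (y, z) \<in> idrel \<Longrightarrow> y \<notin> Q"
    by (rule wfE_min[OF wf_idrel \<open>I \<in> Q\<close>]) blast
  have "maximal_ring_ideal A z"
    unfolding maximal_ring_ideal_def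
  proof (intro conjI allI impI)
    show "ideal z" "z \<noteq> A" using z unfolding Q_def by auto
    fix J assume J: "ideal J" "z \<subseteq> J"
    show "J = z \<or> J = A"
    proof (rule ccontr)
      assume "\<not> (J = z \<or> J = A)"
      then have "(J, z) \<in> idrel" "J \<in> Q" using J z unfolding idrel_def Q_def by auto
      then show False using zmin by blast
    qed
  qed
  then show ?thesis using z unfolding Q_def by blast
qed

end


context ded begin

definition isum where
  "isum I x = {p + a * x | p a. p \<in> I \<and> a \<in> A}"

lemma isum_props:
  assumes I: "ideal I" and x: "x \<in> A"
  shows "ideal (isum I x)" "I \<subseteq> isum I x" "x \<in> isum I x"
proof -
  have IA: "I \<subseteq> A" and Im: "Amod I" using idealD[OF I] by auto
  have I0: "0 \<in> I" and Iadd: "\<And>u v. u \<in> I \<Longrightarrow> v \<in> I \<Longrightarrow> u + v \<in> I"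
    and Imul: "\<And>a u. a \<in> A \<Longrightarrow> u \<in> I \<Longrightarrow> a * u \<in> I"
    using Im unfolding A_submodule_def by auto
  let ?J = "isum I x"
  have JA: "?J \<subseteq> A"
  proof
    fix u assume "u \<in> ?J"
    then obtain p a where "u = p + a * x" "p \<in> I" "a \<in> A" unfolding isum_def by blast
    then show "u \<in> A" using IA x by (simp add: Aadd Amult subsetD)
  qed
  have J0: "0 + 0 * x \<in> ?J" unfolding isum_def using I0 A0 by blast
  have Jadd: "u + v \<in> ?J" if uv: "u \<in> ?J" "v \<in> ?J" for u v
  proof -
    obtain p a p' a' where h: "u = p + a * x" "v = p' + a' * x" "p \<in> I" "a \<in> A" "p' \<in> I" "a' \<in> A"
      using uv unfolding isum_def by blast
    have "u + v = (p + p') + (a + a') * x" using h by (simp add: algebra_simps)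
    moreover have "p + p' \<in> I" "a + a' \<in> A" using h Iadd Aadd by auto
    ultimately show ?thesis unfolding isum_def by blast
  qed
  have Jmul: "b * u \<in> ?J" if bu: "b \<in> A" "u \<in> ?J" for b u
  proof -
    obtain p a where h: "u = p + a * x" "p \<in> I" "a \<in> A" using bu unfolding isum_def by blast
    have "b * u = b * p + (b * a) * x" using h by (simp add: algebra_simps)
    moreover have "b * p \<in> I" "b * a \<in> A" using h bu Imul Amult by auto
    ultimately show ?thesis unfolding isum_def by blast
  qed
  show "ideal ?J" unfolding ring_ideal_def A_submodule_def using JA J0 Jadd Jmul by simp
  show "I \<subseteq> ?J"
  proof
    fix p assume "p \<in> I"
    then have "p + 0 * x \<in> ?J" unfolding isum_def using A0 by blast
    then show "p \<in> ?J" by simp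
  qed
  have "0 + 1 * x \<in> ?J" unfolding isum_def using I0 A1 by blast
  then show "x \<in> ?J" by simp
qed

lemma isum_mul:
  assumes I: "ideal I" and x: "x \<in> A" and y: "y \<in> A" and xy: "x * y \<in> I"
  shows "mul (isum I x) (isum I y) \<subseteq> I"
proof (rule mult_least[OF idealD(2)[OF I]])
  have IA: "I \<subseteq> A" and Im: "Amod I" using idealD[OF I] by auto
  have Iadd: "\<And>u v. u \<in> I \<Longrightarrow> v \<in> I \<Longrightarrow> u + v \<in> I"
    and Imul: "\<And>a u. a \<in> A \<Longrightarrow> u \<in> I \<Longrightarrow> a * u \<in> I"
    using Im unfolding A_submodule_def by auto
  fix u v assume "u \<in> isum I x" "v \<in> isum I y"
  then obtain p a q b where h: "u = p + a * x" "v = q + b * y" "p \<in> I" "a \<in> A" "q \<in> I" "b \<in> A"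
    unfolding isum_def by blast
  have e: "u * v = (q + b * y) * p + (a * x) * q + (a * b) * (x * y)" using h by (simp add: algebra_simps)
  have qA: "q \<in> A" using h IA by blast
  have "(q + b * y) * p \<in> I" using Imul[OF _ h(3)] Aadd[OF qA Amult[OF h(6) y]] by blast
  moreover have "(a * x) * q \<in> I" using Imul[OF Amult[OF h(4) x] h(5)] .
  moreover have "(a * b) * (x * y) \<in> I" using Imul[OF Amult[OF h(4) h(6)] xy] .
  ultimately show "u * v \<in> I" unfolding e using Iadd by blast
qed

definition goodPs where
  "goodPs Ps \<longleftrightarrow> (\<forall>Q\<in>set Ps. prime_ring_ideal A Q \<and> Q \<noteq> {0})"

lemma goodPs_ideal: "goodPs Ps \<Longrightarrow> Q \<in> set Ps \<Longrightarrow> ideal Q"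
  unfolding goodPs_def prime_ring_ideal_def by blast

lemma contains_prodl:
  "ideal I \<Longrightarrow> I \<noteq> {0} \<Longrightarrow> \<exists>Ps. goodPs Ps \<and> prodl Ps \<subseteq> I"
  using wf_idrel
proof (induction I rule: wf_induct_rule)
  case (less I)
  have I: "ideal I" "I \<noteq> {0}" using less.prems by auto
  show ?case
  proof (cases "I = A")
    case True
    then have "goodPs [] \<and> prodl [] \<subseteq> I" unfolding goodPs_def by simp
    then show ?thesis by blast
  next
    case IA: False
    show ?thesis
    proof (cases "prime_ring_ideal A I")
      case True
      have "prodl [I] = I" using mult_comm[of I A] mult_A[OF idealD(2)[OF I(1)]] by simp
      then have "goodPs [I] \<and> prodl [I] \<subseteq> I" unfolding goodPs_def using True I by simp
      then show ?thesis by blast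
    next
      case False
      then obtain x y where xy: "x \<in> A" "y \<in> A" "x * y \<in> I" "x \<notin> I" "y \<notin> I"
        using I IA unfolding prime_ring_ideal_def by blast
      note Jx = isum_props[OF I(1) xy(1)] and Jy = isum_props[OF I(1) xy(2)]
      have "(isum I x, I) \<in> idrel" using Jx I xy unfolding idrel_def by blast
      moreover have "isum I x \<noteq> {0}" using Jx(2) I(2) Amod_closed(1)[OF idealD(2)[OF I(1)]] by blast
      ultimately obtain Ps1 where P1: "goodPs Ps1" "prodl Ps1 \<subseteq> isum I x" using less.IH Jx(1) by blast
      have "(isum I y, I) \<in> idrel" using Jy I xy unfolding idrel_def by blast
      moreover have "isum I y \<noteq> {0}" using Jy(2) I(2) Amod_closed(1)[OF idealD(2)[OF I(1)]] by blast
      ultimately obtain Ps2 where P2: "goodPs Ps2" "prodl Ps2 \<subseteq> isum I y" using less.IH Jy(1) by blast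
      have "prodl (Ps1 @ Ps2) \<subseteq> mul (isum I x) (isum I y)"
        unfolding prodl_append using P1(2) P2(2) by (rule mult_mono)
      also have "\<dots> \<subseteq> I" by (rule isum_mul[OF I(1) xy(1,2,3)])
      finally have "goodPs (Ps1 @ Ps2) \<and> prodl (Ps1 @ Ps2) \<subseteq> I"
        using P1(1) P2(1) unfolding goodPs_def by auto
      then show ?thesis by blast
    qed
  qed
qed

lemma inv_big:
  assumes P: "maximal_ring_ideal A P" "P \<noteq> {0}"
  shows "\<exists>t\<in>frac_inv A P. t \<notin> A"
proof -
  have Pid: "ideal P" and PA: "P \<noteq> A" using P(1) unfolding maximal_ring_ideal_def by auto
  have PsubA: "P \<subseteq> A" and Pm: "Amod P" using idealD[OF Pid] by auto
  obtain a where a: "a \<in> P" "a \<noteq> 0" using P(2) Amod_closed(1)[OF Pm] by blast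
  have aA: "a \<in> A" using a PsubA by blast
  define aA where "aA = (*) a ` A"
  have "aA \<subseteq> A" unfolding aA_def using aA Amult by blast
  moreover have "Amod aA" unfolding aA_def by (rule Amod_image_scale[OF Amod_A])
  ultimately have aAid: "ideal aA" unfolding ring_ideal_def by simp
  have "a * 1 \<in> aA" unfolding aA_def using A1 by blast
  then have "aA \<noteq> {0}" using a by auto
  then obtain Ps0 where "goodPs Ps0 \<and> prodl Ps0 \<subseteq> aA" using contains_prodl[OF aAid] by blast
  then obtain Ps where Ps: "goodPs Ps" "prodl Ps \<subseteq> aA"
    and Psmin: "\<And>Qs. goodPs Qs \<and> prodl Qs \<subseteq> aA \<Longrightarrow> length Ps \<le> length Qs"
    using ex_has_least_nat[of "\<lambda>Ps. goodPs Ps \<and> prodl Ps \<subseteq> aA" Ps0 length] by blast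
  have aAP: "aA \<subseteq> P"
  proof
    fix z assume "z \<in> aA"
    then obtain x where x: "x \<in> A" "z = a * x" unfolding aA_def by blast
    have "x * a \<in> P" by (rule Amod_closed(3)[OF Pm x(1) a(1)])
    then show "z \<in> P" using x(2) by (simp add: mult.commute)
  qed
  have Pprime: "prime_ring_ideal A P" by (rule max_prime[OF P(1)])
  have "prodl Ps \<subseteq> P" using Ps(2) aAP by (rule order_trans)
  moreover have hid: "\<And>Q. Q \<in> set Ps \<Longrightarrow> ideal Q" using goodPs_ideal[OF Ps(1)] by blast
  ultimately have "\<exists>Q\<in>set Ps. Q \<subseteq> P" using prodl_prime[OF Pprime] by blast
  then obtain Q where Q: "Q \<in> set Ps" "Q \<subseteq> P" by blast
  have "prime_ring_ideal A Q" "Q \<noteq> {0}" using Ps(1) Q(1) unfolding goodPs_def by auto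
  then have "maximal_ring_ideal A Q" by (rule prime_max)
  then have "\<forall>I. ideal I \<longrightarrow> Q \<subseteq> I \<longrightarrow> I = Q \<or> I = A" unfolding maximal_ring_ideal_def by (elim conjE)
  then have "P = Q \<or> P = A" using Q(2) Pid by blast
  then have "P = Q" using PA by blast
  define Ps' where "Ps' = remove1 P Ps"
  have PinPs: "P \<in> set Ps" using Q \<open>P = Q\<close> by simp
  have eq: "prodl Ps = mul P (prodl Ps')" unfolding Ps'_def by (rule prodl_remove[OF PinPs])
  have "length Ps' < length Ps" unfolding Ps'_def using length_pos_if_in_set[OF PinPs] PinPs by (simp add: length_remove1)
  moreover have "goodPs Ps'" using Ps(1) set_remove1_subset[of P Ps] unfolding goodPs_def Ps'_def by (meson subsetD)
  ultimately have "\<not> prodl Ps' \<subseteq> aA" using Psmin[of Ps'] by linarith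
  then obtain b where b: "b \<in> prodl Ps'" "b \<notin> aA" by blast
  have "ideal (prodl Ps')" by (rule prodl_ideal[OF goodPs_ideal[OF \<open>goodPs Ps'\<close>]])
  then have bA: "b \<in> A" using b(1) idealD(1) by blast
  define t where "t = b / a"
  have "t \<in> F" unfolding t_def using F_intro[OF bA aA a(2)] .
  moreover have "t * p \<in> A" if p: "p \<in> P" for p
  proof -
    have "p * b \<in> prodl Ps" unfolding eq by (rule mult_in[OF p b(1)])
    then have "p * b \<in> aA" using Ps(2) by blast
    then obtain x where x: "x \<in> A" "p * b = a * x" unfolding aA_def by blast
    have "t * p = x" unfolding t_def using x(2) a(2) by (simp add: field_simps)
    then show ?thesis using x(1) by simp
  qed
  ultimately have "t \<in> frac_inv A P" unfolding frac_inv_def by blast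
  moreover have "t \<notin> A"
  proof
    assume "t \<in> A"
    then have "a * t \<in> aA" unfolding aA_def by blast
    moreover have "a * t = b" unfolding t_def using a(2) by simp
    ultimately show False using b(2) by simp
  qed
  ultimately show ?thesis by blast
qed


lemma denom:
  assumes "finite G" "G \<subseteq> F"
  shows "\<exists>d\<in>A. d \<noteq> 0 \<and> (\<forall>g\<in>G. d * g \<in> A)"
  using assms
proof (induction G rule: finite_induct)
  case empty then show ?case using A1 by (intro bexI[of _ 1]) auto
next
  case (insert g G)
  then obtain d where d: "d \<in> A" "d \<noteq> 0" "\<forall>h\<in>G. d * h \<in> A" by auto
  have "g \<in> F" using insert.prems by simp
  then obtain a b where ab: "a \<in> A" "b \<in> A" "b \<noteq> 0" "g = a / b" by (rule F_cases)
  have "d * b \<in> A" using Amult[OF d(1) ab(2)] .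
  moreover have "d * b \<noteq> 0" using d(2) ab(3) by simp
  moreover have "\<forall>h\<in>insert g G. (d * b) * h \<in> A"
  proof
    fix h assume "h \<in> insert g G"
    then show "(d * b) * h \<in> A"
    proof
      assume "h = g"
      then have "(d * b) * h = d * a" using ab(3,4) by (simp add: field_simps)
      then show ?thesis using Amult[OF d(1) ab(1)] by (simp only:)
    next
      assume "h \<in> G"
      then have "d * h \<in> A" using d(3) by blast
      then have "b * (d * h) \<in> A" using Amult[OF ab(2)] by blast
      moreover have "(d * b) * h = b * (d * h)" by (simp add: algebra_simps)
      ultimately show ?thesis by (simp only:)
    qed
  qed
  ultimately show ?case by blast
qed

lemma denom_span:
  assumes "finite G" "G \<subseteq> F"
  shows "\<exists>d\<in>A. d \<noteq> 0 \<and> (\<forall>m\<in>A_span A (*) G. d * m \<in> A)"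
proof -
  obtain d where d: "d \<in> A" "d \<noteq> 0" "\<forall>g\<in>G. d * g \<in> A" using denom[OF assms] by blast
  have "d * m \<in> A" if m: "m \<in> A_span A (*) G" for m
  proof -
    obtain c where c: "m = (\<Sum>g\<in>G. c g * g)" "\<forall>g\<in>G. c g \<in> A" using m unfolding A_span_def by blast
    have "d * m = (\<Sum>g\<in>G. c g * (d * g))" unfolding c(1) by (simp add: sum_distrib_left algebra_simps)
    also have "\<dots> \<in> A" using c(2) d(3) Amult by (intro Amod_sum[OF Amod_A]) blast
    finally show ?thesis .
  qed
  then show ?thesis using d by blast
qed

lemma integral_lemma:
  assumes M: "Amod M" "A_fin_gen A (*) M" "M \<subseteq> F" "M \<noteq> {0}"
    and xM: "\<And>m. m \<in> M \<Longrightarrow> x * m \<in> M"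
  shows "x \<in> A"
proof -
  obtain G where G: "finite G" "G \<subseteq> M" "M = A_span A (*) G" using M(2) unfolding A_fin_gen_def by blast
  have "G \<subseteq> F" using G(2) M(3) by blast
  then obtain d where d: "d \<in> A" "d \<noteq> 0" "\<forall>m\<in>M. d * m \<in> A" using denom_span[OF G(1)] G(3) by blast
  obtain m0 where m0: "m0 \<in> M" "m0 \<noteq> 0" using M(4) Amod_closed(1)[OF M(1)] by blast
  have pw: "x ^ k * m0 \<in> M" for k
  proof (induction k)
    case 0 then show ?case using m0 by simp
  next
    case (Suc k)
    have "x ^ Suc k * m0 = x * (x ^ k * m0)" by simp
    then show ?case using xM[OF Suc] by (simp add: mult.assoc)
  qed
  define c where "c = d * m0"
  have cA: "c \<in> A" unfolding c_def using d(3) m0(1) by blast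
  have c0: "c \<noteq> 0" unfolding c_def using d(2) m0(2) by simp
  have cx: "c * x ^ k \<in> A" for k
  proof -
    have "c * x ^ k = d * (x ^ k * m0)" unfolding c_def by (simp add: algebra_simps)
    moreover have "d * (x ^ k * m0) \<in> A" using d(3) pw[of k] by blast
    ultimately show ?thesis by (simp only:)
  qed
  define PS where "PS k = {(\<Sum>i<k. a i * x ^ i) | a. \<forall>i<k. a i \<in> A}" for k
  define J where "J k = (*) c ` PS k" for k
  have PSmod: "Amod (PS k)" for k
    unfolding A_submodule_def
  proof (intro conjI ballI)
    have "(\<Sum>i<k. (\<lambda>_. 0) i * x ^ i) \<in> PS k" unfolding PS_def by (rule CollectI, rule exI[of _ "\<lambda>_. 0"]) simp
    then show "0 \<in> PS k" by simp
  next
    fix u v assume "u \<in> PS k" "v \<in> PS k"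
    then obtain a b where ab: "u = (\<Sum>i<k. a i * x ^ i)" "\<forall>i<k. a i \<in> A"
      "v = (\<Sum>i<k. b i * x ^ i)" "\<forall>i<k. b i \<in> A" unfolding PS_def by blast
    have "u + v = (\<Sum>i<k. (a i + b i) * x ^ i)" unfolding ab by (simp add: sum.distrib algebra_simps)
    moreover have "\<forall>i<k. a i + b i \<in> A" using ab Aadd by blast
    ultimately show "u + v \<in> PS k" unfolding PS_def by (intro CollectI exI[of _ "\<lambda>i. a i + b i"] conjI) simp_all
  next
    fix e u assume e: "e \<in> A" and "u \<in> PS k"
    then obtain a where a: "u = (\<Sum>i<k. a i * x ^ i)" "\<forall>i<k. a i \<in> A" unfolding PS_def by blast
    have "e * u = (\<Sum>i<k. (e * a i) * x ^ i)" unfolding a by (simp add: sum_distrib_left algebra_simps)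
    moreover have "\<forall>i<k. e * a i \<in> A" using a e Amult by blast
    ultimately show "e * u \<in> PS k" unfolding PS_def by (intro CollectI exI[of _ "\<lambda>i. e * a i"] conjI) simp_all
  qed
  have Jid: "ideal (J k)" for k
  proof -
    have "J k \<subseteq> A"
    proof
      fix z assume "z \<in> J k"
      then obtain a where a: "z = c * (\<Sum>i<k. a i * x ^ i)" "\<forall>i<k. a i \<in> A" unfolding J_def PS_def by blast
      have "z = (\<Sum>i<k. a i * (c * x ^ i))" unfolding a by (simp add: sum_distrib_left algebra_simps)
      also have "\<dots> \<in> A" using a(2) cx Amult by (intro Amod_sum[OF Amod_A]) auto
      finally show "z \<in> A" .
    qed
    then show ?thesis unfolding ring_ideal_def J_def using Amod_image_scale[OF PSmod] by blast
  qed
  have PSmono: "PS k \<subseteq> PS (Suc k)" for k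
  proof
    fix u assume "u \<in> PS k"
    then obtain a where a: "u = (\<Sum>i<k. a i * x ^ i)" "\<forall>i<k. a i \<in> A" unfolding PS_def by blast
    define a' where "a' i = (if i < k then a i else 0)" for i
    have "u = (\<Sum>i<Suc k. a' i * x ^ i)" unfolding a a'_def by simp
    moreover have "\<forall>i<Suc k. a' i \<in> A" unfolding a'_def using a(2) by simp
    ultimately show "u \<in> PS (Suc k)" unfolding PS_def by (intro CollectI exI[of _ a'] conjI) simp_all
  qed
  have "J 0 \<in> range J" by simp
  then obtain z where z: "z \<in> range J" and zmin: "\<And>y. (y, z) \<in> idrel \<Longrightarrow> y \<notin> range J"
    by (rule wfE_min[OF wf_idrel]) blast
  then obtain K where K: "z = J K" by blast
  have "J K \<subseteq> J (Suc K)" unfolding J_def using PSmono by blast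
  moreover have "\<not> J K \<subset> J (Suc K)"
  proof
    assume "J K \<subset> J (Suc K)"
    then have "(J (Suc K), J K) \<in> idrel" unfolding idrel_def using Jid by blast
    then show False using zmin K by blast
  qed
  ultimately have JK: "J (Suc K) = J K" by blast
  define e where "e i = (if i = K then 1 else (0::'a))" for i
  have "x ^ K = (\<Sum>i<Suc K. e i * x ^ i)" unfolding e_def by (simp add: if_distrib sum.delta' cong: if_cong)
  moreover have "\<forall>i<Suc K. e i \<in> A" unfolding e_def by simp
  ultimately have "x ^ K \<in> PS (Suc K)" unfolding PS_def by (intro CollectI exI[of _ e] conjI) simp_all
  then have "c * x ^ K \<in> J K" using JK unfolding J_def by blast
  then obtain a where a: "c * x ^ K = c * (\<Sum>i<K. a i * x ^ i)" "\<forall>i<K. a i \<in> A"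
    unfolding J_def PS_def by blast
  have xK: "x ^ K = (\<Sum>i<K. a i * x ^ i)" using a(1) c0 by simp
  have "K \<noteq> 0"
  proof
    assume "K = 0"
    then show False using xK by simp
  qed
  then have "1 \<le> K" by simp
  moreover have "\<forall>i<K. - a i \<in> A" using a(2) Aneg by blast
  moreover have "x ^ K + (\<Sum>i<K. (- a i) * x ^ i) = 0" using xK by (simp add: sum_negf)
  ultimately have "integral_over A x" unfolding integral_over_def
    by (intro exI[of _ K] exI[of _ "\<lambda>i. - a i"] conjI) simp_all
  moreover have "x \<in> F"
  proof -
    have "x = (x * m0) / m0" using m0(2) by simp
    moreover have "x * m0 \<in> F" "m0 \<in> F" using xM[OF m0(1)] m0(1) M(3) by blast+
    ultimately show ?thesis using F_div[of "x * m0" m0] by simp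
  qed
  ultimately show ?thesis using intclosed by blast
qed

lemma inv_le: "mul I (frac_inv A I) \<subseteq> A"
  by (rule mult_least[OF Amod_A]) (auto simp: frac_inv_def mult.commute)

lemma one_inv: "I \<subseteq> A \<Longrightarrow> 1 \<in> frac_inv A I"
  unfolding frac_inv_def using F_A[OF A1] by auto

lemma inv_crit:
  assumes "mul I N = A" "N \<subseteq> F"
  shows "mul I (frac_inv A I) = A"
proof -
  have "N \<subseteq> frac_inv A I"
  proof
    fix n assume n: "n \<in> N"
    have "\<forall>i\<in>I. n * i \<in> A"
    proof
      fix i assume "i \<in> I"
      then have "i * n \<in> mul I N" by (rule mult_in[OF _ n])
      then show "n * i \<in> A" using assms(1) by (simp add: mult.commute)
    qed
    then show "n \<in> frac_inv A I" unfolding frac_inv_def using n assms(2) by blast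
  qed
  then have "A \<subseteq> mul I (frac_inv A I)" using assms(1) mult_mono[of I I N "frac_inv A I"] by blast
  then show ?thesis using inv_le by blast
qed

lemma max_inv:
  assumes P: "maximal_ring_ideal A P" "P \<noteq> {0}"
  shows "mul P (frac_inv A P) = A"
proof -
  have Pid: "ideal P" using P(1) unfolding maximal_ring_ideal_def by blast
  have PA: "P \<subseteq> A" using idealD(1)[OF Pid] .
  let ?Q = "mul P (frac_inv A P)"
  have "ideal ?Q" unfolding ring_ideal_def using inv_le mult_mod by blast
  moreover have "P \<subseteq> ?Q"
  proof
    fix p assume "p \<in> P"
    then have "p * 1 \<in> ?Q" by (rule mult_in[OF _ one_inv[OF PA]])
    then show "p \<in> ?Q" by simp
  qed
  ultimately have "?Q = P \<or> ?Q = A" using P(1) unfolding maximal_ring_ideal_def by blast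
  moreover have "?Q \<noteq> P"
  proof
    assume eq: "?Q = P"
    obtain t where t: "t \<in> frac_inv A P" "t \<notin> A" using inv_big[OF P] by blast
    have "\<And>m. m \<in> P \<Longrightarrow> t * m \<in> P"
    proof -
      fix m assume "m \<in> P"
      then have "m * t \<in> ?Q" by (rule mult_in[OF _ t(1)])
      then show "t * m \<in> P" using eq by (simp add: mult.commute)
    qed
    moreover have "P \<subseteq> F" using PA F_A by blast
    ultimately have "t \<in> A" using integral_lemma[OF idealD(2)[OF Pid] noeth[OF Pid] _ P(2)] by blast
    then show False using t(2) by blast
  qed
  ultimately show ?thesis by blast
qed

lemma inv_F: "frac_inv A I \<subseteq> F"
  unfolding frac_inv_def by blast

lemma ideal_inv:
  "ideal I \<Longrightarrow> I \<noteq> {0} \<Longrightarrow> mul I (frac_inv A I) = A"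
  using wf_idrel
proof (induction I rule: wf_induct_rule)
  case (less I)
  have I: "ideal I" "I \<noteq> {0}" using less.prems by auto
  show ?case
  proof (cases "I = A")
    case True
    have "A \<subseteq> mul A (frac_inv A A)"
    proof
      fix a assume "a \<in> A"
      then have "a * 1 \<in> mul A (frac_inv A A)" by (rule mult_in[OF _ one_inv]) simp
      then show "a \<in> mul A (frac_inv A A)" by simp
    qed
    then show ?thesis using True inv_le by blast
  next
    case False
    then obtain P where P: "maximal_ring_ideal A P" "I \<subseteq> P" using exists_max[OF I(1)] by blast
    have Pid: "ideal P" using P(1) unfolding maximal_ring_ideal_def by blast
    have PA: "P \<subseteq> A" using idealD(1)[OF Pid] .
    have P0: "P \<noteq> {0}" using P(2) I(2) Amod_closed(1)[OF idealD(2)[OF I(1)]] by blast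
    let ?J = "mul I (frac_inv A P)"
    have JA: "?J \<subseteq> A" using mult_mono[OF P(2) order_refl, of "frac_inv A P"] max_inv[OF P(1) P0] by simp
    have Jid: "ideal ?J" unfolding ring_ideal_def using JA mult_mod by blast
    have IJ: "I \<subseteq> ?J"
    proof
      fix p assume "p \<in> I"
      then have "p * 1 \<in> ?J" by (rule mult_in[OF _ one_inv[OF PA]])
      then show "p \<in> ?J" by simp
    qed
    have "?J \<noteq> I"
    proof
      assume eq: "?J = I"
      obtain t where t: "t \<in> frac_inv A P" "t \<notin> A" using inv_big[OF P(1) P0] by blast
      have "\<And>m. m \<in> I \<Longrightarrow> t * m \<in> I"
      proof -
        fix m assume "m \<in> I"
        then have "m * t \<in> ?J" by (rule mult_in[OF _ t(1)])
        then show "t * m \<in> I" using eq by (simp add: mult.commute)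
      qed
      moreover have "I \<subseteq> F" using idealD(1)[OF I(1)] F_A by blast
      ultimately have "t \<in> A" using integral_lemma[OF idealD(2)[OF I(1)] noeth[OF I(1)] _ I(2)] by blast
      then show False using t(2) by blast
    qed
    then have "(?J, I) \<in> idrel" using IJ Jid I(1) unfolding idrel_def by blast
    moreover have "?J \<noteq> {0}" using IJ I(2) Amod_closed(1)[OF idealD(2)[OF I(1)]] by blast
    ultimately have IHJ: "mul ?J (frac_inv A ?J) = A" using less.IH Jid by blast
    let ?N = "mul (frac_inv A P) (frac_inv A ?J)"
    have "mul I ?N = A" using IHJ by (simp add: mult_assoc)
    moreover have "?N \<subseteq> F"
      by (rule mult_least[OF Amod_F]) (use inv_F F_mult in blast)
    ultimately show ?thesis by (rule inv_crit)
  qed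
qed

lemma frac_ideal_inv:
  assumes M: "fractional_ideal A M"
  shows "mul M (frac_inv A M) = A"
proof -
  have Mm: "Amod M" "A_fin_gen A (*) M" "M \<subseteq> F" "M \<noteq> {0}" using M unfolding fractional_ideal_def by auto
  obtain G where G: "finite G" "G \<subseteq> M" "M = A_span A (*) G" using Mm(2) unfolding A_fin_gen_def by blast
  have "G \<subseteq> F" using G(2) Mm(3) by blast
  then obtain d where d: "d \<in> A" "d \<noteq> 0" "\<forall>m\<in>M. d * m \<in> A" using denom_span[OF G(1)] G(3) by blast
  define I where "I = (*) d ` M"
  have "ideal I" unfolding ring_ideal_def I_def using d(3) Amod_image_scale[OF Mm(1)] by blast
  moreover have "I \<noteq> {0}"
  proof -
    obtain m where "m \<in> M" "m \<noteq> 0" using Mm(4) Amod_closed(1)[OF Mm(1)] by blast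
    then have "d * m \<in> I" "d * m \<noteq> 0" unfolding I_def using d(2) by auto
    then show ?thesis by blast
  qed
  ultimately have II: "mul I (frac_inv A I) = A" by (rule ideal_inv)
  define N where "N = (*) d ` frac_inv A I"
  have "mul M N = mul N M" by (rule mult_comm)
  also have "\<dots> = (*) d ` mul (frac_inv A I) M" unfolding N_def by (rule mult_scale)
  also have "\<dots> = (*) d ` mul M (frac_inv A I)" by (simp add: mult_comm)
  also have "\<dots> = mul I (frac_inv A I)" unfolding I_def by (rule mult_scale[symmetric])
  finally have "mul M N = A" using II by simp
  moreover have "N \<subseteq> F" unfolding N_def using inv_F F_mult F_A[OF d(1)] by blast
  ultimately show ?thesis by (rule inv_crit)
qed

lemma colon_eq:
  assumes R: "fractional_ideal A mR" and S: "fractional_ideal A mS"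
  shows "{x. \<forall>m\<in>mR. x * m \<in> mS} = mul mS (frac_inv A mR)"
proof
  have Sm: "Amod mS" using S unfolding fractional_ideal_def by blast
  show "mul mS (frac_inv A mR) \<subseteq> {x. \<forall>m\<in>mR. x * m \<in> mS}"
  proof
    fix w assume w: "w \<in> mul mS (frac_inv A mR)"
    have "\<forall>m\<in>mR. w * m \<in> mS"
    proof (rule mult_induct[OF w, where Q="\<lambda>w. \<forall>m\<in>mR. w * m \<in> mS"])
      show "Amod {w. \<forall>m\<in>mR. w * m \<in> mS}"
        using Sm unfolding A_submodule_def by (simp add: distrib_right mult.assoc)
      fix s t assume st: "s \<in> mS" "t \<in> frac_inv A mR"
      show "\<forall>m\<in>mR. s * t * m \<in> mS"
      proof
        fix m assume "m \<in> mR"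
        then have "t * m \<in> A" using st(2) unfolding frac_inv_def by blast
        then have "(t * m) * s \<in> mS" using Amod_closed(3)[OF Sm] st(1) by blast
        then show "s * t * m \<in> mS" by (simp add: algebra_simps)
      qed
    qed
    then show "w \<in> {x. \<forall>m\<in>mR. x * m \<in> mS}" by blast
  qed
  show "{x. \<forall>m\<in>mR. x * m \<in> mS} \<subseteq> mul mS (frac_inv A mR)"
  proof
    fix x assume "x \<in> {x. \<forall>m\<in>mR. x * m \<in> mS}"
    then have x: "\<And>m. m \<in> mR \<Longrightarrow> x * m \<in> mS" by blast
    have one: "1 \<in> mul mR (frac_inv A mR)" using frac_ideal_inv[OF R] by simp
    have "x * 1 \<in> mul mS (frac_inv A mR)"
    proof (rule mult_induct[OF one, where Q="\<lambda>w. x * w \<in> mul mS (frac_inv A mR)"])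
      show "Amod {w. x * w \<in> mul mS (frac_inv A mR)}"
        using mult_mod[of mS "frac_inv A mR"] unfolding A_submodule_def
        by (simp add: distrib_left mult.left_commute)
      fix m t assume "m \<in> mR" "t \<in> frac_inv A mR"
      then have "(x * m) * t \<in> mul mS (frac_inv A mR)" using mult_in x by blast
      then show "x * (m * t) \<in> mul mS (frac_inv A mR)" by (simp add: mult.assoc)
    qed
    then show "x \<in> mul mS (frac_inv A mR)" by simp
  qed
qed

end


definition mkmap :: "('a::field \<Rightarrow> 'b::ab_group_add \<Rightarrow> 'b) \<Rightarrow> (nat \<Rightarrow> 'b) \<Rightarrow> nat \<Rightarrow> (nat \<Rightarrow> 'b) \<Rightarrow> 'b \<Rightarrow> 'b" where
  "mkmap sc b n w = (\<lambda>x. \<Sum>k<n. sc (module.representation sc (b ` {..<n}) x (b k)) (w k))"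

context vector_space begin

lemma indep_card_le:
  assumes G: "finite G" "W \<subseteq> span G" and B: "independent B" "B \<subseteq> W"
  shows "finite B" "card B \<le> dim W"
proof -
  obtain BB where BB: "BB \<subseteq> W" "independent BB" "W \<subseteq> span BB" "card BB = dim W"
    by (rule basis_exists)
  have "BB \<subseteq> span G" using BB(1) G(2) by blast
  then have fBB: "finite BB" using independent_span_bound[OF G(1) BB(2)] by blast
  have "B \<subseteq> span BB" using B(2) BB(3) by blast
  then have "finite B \<and> card B \<le> card BB" using independent_span_bound[OF fBB B(1)] by blast
  then show "finite B" "card B \<le> dim W" using BB(4) by auto
qed

lemma indep_card_eq_span:
  assumes G: "finite G" "W \<subseteq> span G" and B: "independent B" "B \<subseteq> W" "card B = dim W"
  shows "W \<subseteq> span B"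
proof
  fix w assume w: "w \<in> W"
  show "w \<in> span B"
  proof (rule ccontr)
    assume nw: "w \<notin> span B"
    have fB: "finite B" using indep_card_le(1)[OF G B(1,2)] .
    have i: "independent (insert w B)" using independent_insertI[OF nw B(1)] .
    have "w \<notin> B" using nw span_base by blast
    then have "card (insert w B) = card B + 1" using fB by simp
    moreover have "card (insert w B) \<le> dim W" using indep_card_le(2)[OF G i] w B(2) by blast
    ultimately show False using B(3) by simp
  qed
qed

lemma ib_exists:
  assumes G: "finite G" "W \<subseteq> span G" and W: "subspace W"
  shows "\<exists>b. indexed_basis scale W (dim W) b"
proof -
  obtain BB where BB: "BB \<subseteq> W" "independent BB" "W \<subseteq> span BB" "card BB = dim W"
    by (rule basis_exists)
  have fBB: "finite BB" using indep_card_le(1)[OF G BB(2,1)] .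
  obtain b where b: "bij_betw b {0..<card BB} BB" using ex_bij_betw_nat_finite[OF fBB] by blast
  have img: "b ` {..<dim W} = BB" using b BB(4) by (simp add: bij_betw_def atLeast0LessThan)
  have inj: "inj_on b {..<dim W}" using b BB(4) by (simp add: bij_betw_def atLeast0LessThan)
  have "span BB = W" using span_minimal[OF BB(1) W] BB(3) by blast
  then show ?thesis unfolding indexed_basis_def using img inj BB(2) by auto
qed

lemma ib_ext:
  assumes G: "finite G" "W \<subseteq> span G" and W: "subspace W"
    and x: "inj_on x {..<r}" "independent (x ` {..<r})" "x ` {..<r} \<subseteq> W"
  shows "\<exists>e. indexed_basis scale W (dim W) e \<and> (\<forall>k<r. e k = x k)"
proof -
  let ?X = "x ` {..<r}"
  obtain E where E: "?X \<subseteq> E" "E \<subseteq> W" "independent E" "W \<subseteq> span E"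
    using maximal_independent_subset_extend[OF x(3) x(2)] by blast
  have fE: "finite E" using indep_card_le(1)[OF G E(3,2)] .
  have cE: "card E = dim W" using basis_card_eq_dim[OF E(2,4,3)] .
  have cX: "card ?X = r" using card_image[OF x(1)] by simp
  have fD: "finite (E - ?X)" using fE by simp
  have cD: "card (E - ?X) = dim W - r" using card_Diff_subset[OF finite_subset[OF E(1) fE] E(1)] cE cX by simp
  have rle: "r \<le> dim W" using card_mono[OF fE E(1)] cX cE by simp
  obtain g where g: "bij_betw g {0..<card (E - ?X)} (E - ?X)" using ex_bij_betw_nat_finite[OF fD] by blast
  define n where "n = dim W"
  define e where "e k = (if k < r then x k else g (k - r))" for k
  have img: "e ` {..<n} = E"
  proof
    show "e ` {..<n} \<subseteq> E"
    proof
      fix z assume "z \<in> e ` {..<n}"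
      then obtain k where k: "k < n" "z = e k" by blast
      show "z \<in> E"
      proof (cases "k < r")
        case True then show ?thesis using k E(1) unfolding e_def by auto
      next
        case False
        then have "k - r \<in> {0..<card (E - ?X)}" using k(1) cD unfolding n_def by auto
        then have "g (k - r) \<in> E - ?X" using g unfolding bij_betw_def by blast
        then show ?thesis using k False unfolding e_def by simp
      qed
    qed
    show "E \<subseteq> e ` {..<n}"
    proof
      fix z assume z: "z \<in> E"
      show "z \<in> e ` {..<n}"
      proof (cases "z \<in> ?X")
        case True
        then obtain k where "k < r" "z = x k" by blast
        then have "k < n" "e k = z" using rle unfolding e_def n_def by auto
        then show ?thesis by blast
      next
        case False
        then have "z \<in> g ` {0..<card (E - ?X)}" using z g unfolding bij_betw_def by blast
        then obtain j where j: "j < card (E - ?X)" "z = g j" by auto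
        have "j + r < n" using j(1) cD rle unfolding n_def by simp
        moreover have "e (j + r) = z" using j(2) unfolding e_def by simp
        ultimately show ?thesis by blast
      qed
    qed
  qed
  have inj: "inj_on e {..<n}"
    using img cE unfolding n_def by (simp add: inj_on_iff_eq_card)
  have "span E = W" using span_minimal[OF E(2) W] E(4) by blast
  then have "indexed_basis scale W n e" unfolding indexed_basis_def using img inj E(3) by auto
  moreover have "\<forall>k<r. e k = x k" unfolding e_def by simp
  ultimately show ?thesis unfolding n_def by blast
qed


lemma ib_props:
  assumes "indexed_basis scale W n b"
  shows "inj_on b {..<n}" "independent (b ` {..<n})" "span (b ` {..<n}) = W" "subspace W"
    "\<And>k. k < n \<Longrightarrow> b k \<in> W"
  using assms unfolding indexed_basis_def by (auto intro: span_base)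

lemma rep_basis_idx:
  assumes b: "indexed_basis scale W n b" and k: "k < n" and i: "i < n"
  shows "representation (b ` {..<n}) (b k) (b i) = (if i = k then 1 else 0)"
proof -
  note bp = ib_props[OF b]
  have "representation (b ` {..<n}) (b k) = (\<lambda>v. if v = b k then 1 else 0)"
    using representation_basis[OF bp(2)] k by simp
  moreover have "b i = b k \<longleftrightarrow> i = k" using bp(1) i k by (auto dest: inj_onD)
  ultimately show ?thesis by simp
qed

lemma rep_sum_idx:
  assumes b: "indexed_basis scale W n b" and i: "i < n"
  shows "representation (b ` {..<n}) (\<Sum>k<n. c k *s b k) (b i) = c i"
proof -
  note bp = ib_props[OF b]
  have "representation (b ` {..<n}) (\<Sum>k<n. c k *s b k) = (\<lambda>v. \<Sum>k<n. representation (b ` {..<n}) (c k *s b k) v)"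
    using bp by (intro representation_sum) (auto intro: span_scale span_base)
  moreover have "representation (b ` {..<n}) (c k *s b k) (b i) = (if k = i then c k else 0)" if k: "k < n" for k
  proof -
    have bs: "b k \<in> span (b ` {..<n})" using k by (intro span_base) auto
    show ?thesis using representation_scale[OF bp(2) bs, of "c k"] rep_basis_idx[OF b k i] by simp
  qed
  ultimately have "representation (b ` {..<n}) (\<Sum>k<n. c k *s b k) (b i) = (\<Sum>k<n. if k = i then c k else 0)"
    by (simp del: sum.delta)
  also have "\<dots> = c i" using i by simp
  finally show ?thesis .
qed

lemma expand_idx:
  assumes b: "indexed_basis scale W n b" and v: "v \<in> W"
  shows "v = (\<Sum>k<n. representation (b ` {..<n}) v (b k) *s b k)"
proof -
  note bp = ib_props[OF b]
  have "(\<Sum>bb\<in>b ` {..<n}. representation (b ` {..<n}) v bb *s bb) = v"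
    using sum_representation_eq[OF bp(2)] v bp(3) by auto
  moreover have "(\<Sum>bb\<in>b ` {..<n}. representation (b ` {..<n}) v bb *s bb) = (\<Sum>k<n. representation (b ` {..<n}) v (b k) *s b k)"
    by (rule sum.reindex[OF bp(1), unfolded comp_def])
  ultimately show ?thesis by simp
qed

lemma rep_lin:
  assumes b: "indexed_basis scale W n b" and v: "\<And>k. k \<in> I \<Longrightarrow> v k \<in> W"
  shows "representation (b ` {..<n}) (\<Sum>k\<in>I. c k *s v k) x = (\<Sum>k\<in>I. c k * representation (b ` {..<n}) (v k) x)"
proof -
  note bp = ib_props[OF b]
  have "representation (b ` {..<n}) (\<Sum>k\<in>I. c k *s v k) = (\<lambda>y. \<Sum>k\<in>I. representation (b ` {..<n}) (c k *s v k) y)"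
    using bp v by (intro representation_sum) (auto intro: span_scale)
  moreover have "representation (b ` {..<n}) (c k *s v k) = (\<lambda>y. c k * representation (b ` {..<n}) (v k) y)" if "k \<in> I" for k
    using representation_scale[OF bp(2)] v[OF that] bp(3) by auto
  ultimately show ?thesis by simp
qed

lemma endo_zero: "is_endo scale W u \<Longrightarrow> subspace W \<Longrightarrow> u 0 = 0"
  unfolding is_endo_def using subspace_0[of W] by (metis scale_zero_left)

lemma endo_lin:
  assumes u: "is_endo scale W u" and W: "subspace W" and v: "\<And>k. k \<in> I \<Longrightarrow> v k \<in> W" and fI: "finite I"
  shows "u (\<Sum>k\<in>I. c k *s v k) = (\<Sum>k\<in>I. c k *s u (v k))"
  using fI v
proof (induction I rule: finite_induct)
  case empty then show ?case using endo_zero[OF u W] by simp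
next
  case (insert j I)
  have s1: "c j *s v j \<in> W" using insert.prems W by (simp add: subspace_scale)
  have s2: "(\<Sum>k\<in>I. c k *s v k) \<in> W" using insert.prems W by (intro subspace_sum subspace_scale) auto
  have "u (\<Sum>k\<in>insert j I. c k *s v k) = u (c j *s v j + (\<Sum>k\<in>I. c k *s v k))" using insert by simp
  also have "\<dots> = u (c j *s v j) + u (\<Sum>k\<in>I. c k *s v k)" using u s1 s2 unfolding is_endo_def by blast
  also have "u (c j *s v j) = c j *s u (v j)" using u insert.prems unfolding is_endo_def by simp
  finally show ?case using insert by simp
qed


lemma mk_endo:
  assumes b: "indexed_basis scale W n b" and w: "\<And>k. k < n \<Longrightarrow> w k \<in> W"
  shows "is_endo scale W (mkmap scale b n w)"
proof -
  note bp = ib_props[OF b]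
  have "mkmap scale b n w x \<in> W" for x unfolding mkmap_def using w bp(4) by (intro subspace_sum subspace_scale) auto
  moreover have "mkmap scale b n w (x + y) = mkmap scale b n w x + mkmap scale b n w y" if "x \<in> W" "y \<in> W" for x y
    using representation_add[OF bp(2), of y x] that bp(3)
    by (simp add: mkmap_def scale_left_distrib sum.distrib)
  moreover have "mkmap scale b n w (c *s x) = c *s mkmap scale b n w x" if "x \<in> W" for c x
    using representation_scale[OF bp(2), of x c] that bp(3)
    by (simp add: mkmap_def scale_sum_right)
  ultimately show ?thesis unfolding is_endo_def by blast
qed

lemma mk_sum:
  assumes b: "indexed_basis scale W n b"
  shows "mkmap scale b n w (\<Sum>k<n. c k *s b k) = (\<Sum>k<n. c k *s w k)"
  unfolding mkmap_def using rep_sum_idx[OF b] by simp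

lemma mk_basis:
  assumes b: "indexed_basis scale W n b" and j: "j < n"
  shows "mkmap scale b n w (b j) = w j"
proof -
  have "(\<Sum>k<n. representation (b ` {..<n}) (b j) (b k) *s w k) = (\<Sum>k<n. if k = j then w k else 0)"
    by (intro sum.cong refl) (use rep_basis_idx[OF b j] in auto)
  also have "\<dots> = w j" using j by simp
  finally show ?thesis unfolding mkmap_def .
qed

lemma coord_comp:
  assumes b: "indexed_basis scale W n b" and c: "indexed_basis scale W n c"
    and u: "is_endo scale W u" and w: "\<And>j. j < n \<Longrightarrow> w j \<in> W"
    and i: "i < n" and j: "j < n"
  shows "coord_matrix scale n b (\<lambda>j. u (w j)) i j
       = mm n (coord_matrix scale n b (\<lambda>j. u (c j))) (coord_matrix scale n c w) i j"
proof -
  note bp = ib_props[OF b] and cp = ib_props[OF c]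
  let ?C = "\<lambda>k. representation (c ` {..<n}) (w j) (c k)"
  have "w j = (\<Sum>k<n. ?C k *s c k)" by (rule expand_idx[OF c w[OF j]])
  then have "u (w j) = (\<Sum>k<n. ?C k *s u (c k))"
    using endo_lin[OF u bp(4), of "{..<n}" c ?C] cp(5) by simp
  moreover have "u (c k) \<in> W" if "k < n" for k using u cp(5)[OF that] unfolding is_endo_def by blast
  ultimately have "representation (b ` {..<n}) (u (w j)) (b i) = (\<Sum>k<n. ?C k * representation (b ` {..<n}) (u (c k)) (b i))"
    using rep_lin[OF b, of "{..<n}" "\<lambda>k. u (c k)" ?C "b i"] by simp
  then show ?thesis unfolding coord_matrix_def mm_def by (simp add: mult.commute)
qed

lemma coord_id:
  assumes b: "indexed_basis scale W n b" and i: "i < n" and j: "j < n"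
  shows "coord_matrix scale n b b i j = (if i = j then 1 else 0)"
  unfolding coord_matrix_def using rep_basis_idx[OF b j i] by simp

lemma endo_id: "subspace W \<Longrightarrow> is_endo scale W id"
  unfolding is_endo_def by simp

lemma det_indep:
  assumes b: "indexed_basis scale W n b" and c: "indexed_basis scale W n c" and u: "is_endo scale W u"
  shows "lz_det n (coord_matrix scale n c (\<lambda>j. u (c j))) = lz_det n (coord_matrix scale n b (\<lambda>j. u (b j)))"
proof -
  note bp = ib_props[OF b] and cp = ib_props[OF c]
  have uW: "u (b j) \<in> W" if "j < n" for j using u bp(5)[OF that] unfolding is_endo_def by blast
  let ?Q = "coord_matrix scale n c b" and ?Q' = "coord_matrix scale n b c" and ?M = "coord_matrix scale n b (\<lambda>j. u (b j))"
  have e1: "lz_det n (coord_matrix scale n c (\<lambda>j. u (c j))) = lz_det n (mm n (coord_matrix scale n c (\<lambda>j. u (b j))) ?Q')"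
    by (rule lz_det_cong) (rule coord_comp[OF c b u cp(5)])
  have e2: "lz_det n (coord_matrix scale n c (\<lambda>j. u (b j))) = lz_det n (mm n ?Q ?M)"
    using coord_comp[OF c b endo_id[OF bp(4)] uW] by (intro lz_det_cong) simp
  have e3: "lz_det n (coord_matrix scale n c c) = lz_det n (mm n ?Q ?Q')"
    using coord_comp[OF c b endo_id[OF bp(4)] cp(5)] by (intro lz_det_cong) simp
  have "lz_det n (coord_matrix scale n c c) = 1"
    using coord_id[OF c] lz_det_cong[of n "coord_matrix scale n c c" "\<lambda>i j. if i = j then 1 else 0"] lz_det_id by simp
  then have "lz_det n (mm n ?Q ?Q') = 1" using e3 by simp
  then have qq: "lz_det n ?Q * lz_det n ?Q' = 1" by (simp only: lz_det_mult)
  have "lz_det n (coord_matrix scale n c (\<lambda>j. u (c j))) = lz_det n (coord_matrix scale n c (\<lambda>j. u (b j))) * lz_det n ?Q'"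
    using e1 by (simp only: lz_det_mult)
  also have "\<dots> = lz_det n ?Q * lz_det n ?M * lz_det n ?Q'" using e2 by (simp only: lz_det_mult)
  also have "\<dots> = lz_det n ?M * (lz_det n ?Q * lz_det n ?Q')" by (simp add: algebra_simps)
  finally show ?thesis using qq by simp
qed

lemma endo_det_eq:
  assumes b: "indexed_basis scale W (dim W) b" and u: "is_endo scale W u"
  shows "endo_det scale W u = lz_det (dim W) (coord_matrix scale (dim W) b (\<lambda>j. u (b j)))"
proof -
  let ?c = "SOME b. indexed_basis scale W (dim W) b"
  have c: "indexed_basis scale W (dim W) ?c" using someI[of "\<lambda>b. indexed_basis scale W (dim W) b", OF b] .
  show ?thesis unfolding endo_det_def Let_def using det_indep[OF b c u] by simp
qed

lemma det_inj:
  assumes b: "indexed_basis scale W n b" and u: "is_endo scale W u"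
    and d: "lz_det n (coord_matrix scale n b (\<lambda>j. u (b j))) \<noteq> 0"
    and x: "x \<in> W" "u x = 0"
  shows "x = 0"
proof -
  note bp = ib_props[OF b]
  let ?c = "\<lambda>k. representation (b ` {..<n}) x (b k)"
  have xe: "x = (\<Sum>k<n. ?c k *s b k)" by (rule expand_idx[OF b x(1)])
  then have "u x = (\<Sum>k<n. ?c k *s u (b k))"
    using endo_lin[OF u bp(4), of "{..<n}" b ?c] bp(5) by simp
  moreover have uW: "u (b k) \<in> W" if "k < n" for k using u bp(5)[OF that] unfolding is_endo_def by blast
  ultimately have "representation (b ` {..<n}) (u x) (b i) = (\<Sum>k<n. ?c k * representation (b ` {..<n}) (u (b k)) (b i))" for i
    using rep_lin[OF b, of "{..<n}" "\<lambda>k. u (b k)" ?c "b i"] by simp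
  then have "(\<Sum>k<n. coord_matrix scale n b (\<lambda>j. u (b j)) i k * ?c k) = 0" for i
    using x(2) representation_zero unfolding coord_matrix_def by (simp add: mult.commute)
  then have "?c k = 0" if "k < n" for k using lz_det_kernel[OF d, of ?c k] that by blast
  then show ?thesis using xe by simp
qed
end


context vector_space begin

lemma Aspan_mem: "x \<in> A_span A scale G \<longleftrightarrow> (\<exists>c. (\<forall>g\<in>G. c g \<in> A) \<and> x = (\<Sum>g\<in>G. c g *s g))"
  unfolding A_span_def by blast

lemma Aspan_mod:
  assumes sub: "is_subring A"
  shows "A_submodule A scale (A_span A scale G)"
proof -
  interpret S: subr A by (unfold_locales) (rule sub)
  show ?thesis unfolding A_submodule_def
  proof (intro conjI ballI)
    have "(\<Sum>g\<in>G. (\<lambda>_. 0) g *s g) = 0" by simp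
    moreover have "\<forall>g\<in>G. (\<lambda>_. 0) g \<in> A" by simp
    ultimately show "0 \<in> A_span A scale G" unfolding Aspan_mem by (intro exI[of _ "\<lambda>_. 0"]) simp
  next
    fix x y assume "x \<in> A_span A scale G" "y \<in> A_span A scale G"
    then obtain c c' where c: "\<forall>g\<in>G. c g \<in> A" "x = (\<Sum>g\<in>G. c g *s g)"
      and c': "\<forall>g\<in>G. c' g \<in> A" "y = (\<Sum>g\<in>G. c' g *s g)" unfolding Aspan_mem by blast
    have "x + y = (\<Sum>g\<in>G. (c g + c' g) *s g)" unfolding c c' by (simp add: scale_left_distrib sum.distrib)
    moreover have "\<forall>g\<in>G. c g + c' g \<in> A" using c c' S.Aadd by blast
    ultimately show "x + y \<in> A_span A scale G" unfolding Aspan_mem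
      by (intro exI[of _ "\<lambda>g. c g + c' g"]) simp
  next
    fix a x assume a: "a \<in> A" and "x \<in> A_span A scale G"
    then obtain c where c: "\<forall>g\<in>G. c g \<in> A" "x = (\<Sum>g\<in>G. c g *s g)" unfolding Aspan_mem by blast
    have "a *s x = (\<Sum>g\<in>G. (a * c g) *s g)" unfolding c by (simp add: scale_sum_right)
    moreover have "\<forall>g\<in>G. a * c g \<in> A" using c a S.Amult by blast
    ultimately show "a *s x \<in> A_span A scale G" unfolding Aspan_mem
      by (intro exI[of _ "\<lambda>g. a * c g"]) simp
  qed
qed

lemma Amod_scale_closed:
  assumes "A_submodule A scale M" "a \<in> A" "x \<in> M"
  shows "a *s x \<in> M"
  using assms unfolding A_submodule_def by blast

lemma Amod_add_closed:
  assumes "A_submodule A scale M" "x \<in> M" "y \<in> M"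
  shows "x + y \<in> M"
  using assms unfolding A_submodule_def by blast

lemma Aspan_sub_span: "A_span A scale G \<subseteq> span G"
proof
  fix x assume "x \<in> A_span A scale G"
  then obtain c where c: "x = (\<Sum>g\<in>G. c g *s g)" unfolding Aspan_mem by blast
  show "x \<in> span G" unfolding c by (intro span_sum span_scale span_base)
qed

lemma rank_bound:
  assumes sub: "is_subring A" and G: "finite G"
  shows "finite I \<Longrightarrow> (\<forall>i\<in>I. f i \<in> A_span A scale G) \<Longrightarrow> card G < card I \<Longrightarrow>
     \<exists>c. (\<forall>i\<in>I. c i \<in> A) \<and> (\<Sum>i\<in>I. c i *s f i) = 0 \<and> (\<exists>i\<in>I. c i \<noteq> 0)"
  using G
proof (induction G arbitrary: I f rule: finite_induct)
  interpret S: subr A by (unfold_locales) (rule sub)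
  case empty
  have "I \<noteq> {}" using empty.prems(3) by auto
  then obtain i0 where i0: "i0 \<in> I" by blast
  have f0: "f i = 0" if i: "i \<in> I" for i
  proof -
    obtain c where "f i = (\<Sum>g\<in>{}. c g *s g)" using empty.prems(2) i unfolding Aspan_mem by blast
    then show ?thesis by simp
  qed
  let ?c = "\<lambda>i. if i = i0 then (1::'a) else 0"
  have "(\<Sum>i\<in>I. ?c i *s f i) = 0" using f0 by (simp add: sum.neutral)
  moreover have "\<forall>i\<in>I. ?c i \<in> A" by simp
  moreover have "?c i0 \<noteq> 0" by simp
  ultimately show ?case using i0 by (intro exI[of _ ?c]) blast
next
  interpret S: subr A by (unfold_locales) (rule sub)
  case (insert g G)
  note AG = Aspan_mod[OF sub, of G]
  have dec: "\<exists>a y. a \<in> A \<and> y \<in> A_span A scale G \<and> f i = a *s g + y" if i: "i \<in> I" for i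
  proof -
    obtain c where c: "\<forall>h\<in>insert g G. c h \<in> A" "f i = (\<Sum>h\<in>insert g G. c h *s h)"
      using insert.prems(2) i unfolding Aspan_mem by blast
    have "f i = c g *s g + (\<Sum>h\<in>G. c h *s h)" using c(2) insert.hyps by simp
    moreover have "(\<Sum>h\<in>G. c h *s h) \<in> A_span A scale G" unfolding Aspan_mem using c(1) by blast
    ultimately show ?thesis using c(1) by blast
  qed
  then have "\<forall>i\<in>I. \<exists>ay. fst ay \<in> A \<and> snd ay \<in> A_span A scale G \<and> f i = fst ay *s g + snd ay" by auto
  then obtain ay where ay: "\<forall>i\<in>I. fst (ay i) \<in> A \<and> snd (ay i) \<in> A_span A scale G \<and> f i = fst (ay i) *s g + snd (ay i)"
    by (rule bchoice[elim_format]) blast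
  define a where "a i = fst (ay i)" for i
  define y where "y i = snd (ay i)" for i
  have aA: "a i \<in> A" and yG: "y i \<in> A_span A scale G" and fe: "f i = a i *s g + y i" if "i \<in> I" for i
    using ay that unfolding a_def y_def by auto
  have cardI: "card G + 1 < card I" using insert.prems(3) insert.hyps by simp
  show ?case
  proof (cases "\<forall>i\<in>I. a i = 0")
    case True
    then have "\<forall>i\<in>I. f i \<in> A_span A scale G" using fe yG by simp
    then show ?thesis using insert.IH[OF insert.prems(1)] cardI by simp
  next
    case False
    then obtain i0 where i0: "i0 \<in> I" "a i0 \<noteq> 0" by blast
    define I' where "I' = I - {i0}"
    define f' where "f' i = a i0 *s f i - a i *s f i0" for i
    have f'G: "\<forall>i\<in>I'. f' i \<in> A_span A scale G"
    proof
      fix i assume "i \<in> I'"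
      then have i: "i \<in> I" unfolding I'_def by blast
      have comm: "a i0 *s (a i *s g) = a i *s (a i0 *s g)" by (rule scale_left_commute)
      have "f' i = (a i0 *s (a i *s g) + a i0 *s y i) - (a i *s (a i0 *s g) + a i *s y i0)"
        unfolding f'_def fe[OF i] fe[OF i0(1)] by (simp only: scale_right_distrib)
      also have "\<dots> = a i0 *s y i - a i *s y i0" unfolding comm by simp
      also have "\<dots> = a i0 *s y i + (- a i) *s y i0" by (simp add: scale_minus_left)
      finally have feq: "f' i = a i0 *s y i + (- a i) *s y i0" .
      have h2: "a i0 *s y i \<in> A_span A scale G" by (rule Amod_scale_closed[OF AG aA[OF i0(1)] yG[OF i]])
      have h3: "(- a i) *s y i0 \<in> A_span A scale G" by (rule Amod_scale_closed[OF AG S.Aneg[OF aA[OF i]] yG[OF i0(1)]])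
      have "a i0 *s y i + (- a i) *s y i0 \<in> A_span A scale G" by (rule Amod_add_closed[OF AG h2 h3])
      then show "f' i \<in> A_span A scale G" by (simp only: feq)
    qed
    have fI': "finite I'" unfolding I'_def using insert.prems(1) by simp
    have "card I' = card I - 1" unfolding I'_def using i0(1) insert.prems(1) by simp
    then have "card G < card I'" using cardI by simp
    then obtain c' where c': "\<forall>i\<in>I'. c' i \<in> A" "(\<Sum>i\<in>I'. c' i *s f' i) = 0" "\<exists>i\<in>I'. c' i \<noteq> 0"
      using insert.IH[OF fI' f'G] by blast
    define c where "c i = (if i = i0 then - (\<Sum>j\<in>I'. c' j * a j) else c' i * a i0)" for i
    have "(\<Sum>i\<in>I. c i *s f i) = c i0 *s f i0 + (\<Sum>i\<in>I'. c i *s f i)"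
      unfolding I'_def using i0(1) insert.prems(1) by (simp add: sum.remove)
    also have "(\<Sum>i\<in>I'. c i *s f i) = (\<Sum>i\<in>I'. (c' i * a i0) *s f i)"
      unfolding c_def I'_def by (intro sum.cong) auto
    also have "c i0 *s f i0 = - ((\<Sum>j\<in>I'. c' j * a j) *s f i0)" unfolding c_def by simp
    also have "- ((\<Sum>j\<in>I'. c' j * a j) *s f i0) + (\<Sum>i\<in>I'. (c' i * a i0) *s f i) = (\<Sum>i\<in>I'. c' i *s f' i)"
    proof -
      have h1: "c' i *s f' i = (c' i * a i0) *s f i - (c' i * a i) *s f i0" for i
        unfolding f'_def by (simp only: scale_right_diff_distrib scale_scale)
      have "(\<Sum>i\<in>I'. c' i *s f' i) = (\<Sum>i\<in>I'. (c' i * a i0) *s f i) - (\<Sum>i\<in>I'. (c' i * a i) *s f i0)"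
        unfolding h1 by (rule sum_subtractf)
      also have "(\<Sum>i\<in>I'. (c' i * a i) *s f i0) = (\<Sum>j\<in>I'. c' j * a j) *s f i0"
        by (rule scale_sum_left[symmetric])
      finally show ?thesis by simp
    qed
    also have "\<dots> = 0" by (rule c'(2))
    finally have "(\<Sum>i\<in>I. c i *s f i) = 0" .
    moreover have "\<forall>i\<in>I. c i \<in> A"
    proof
      fix i assume "i \<in> I"
      show "c i \<in> A"
      proof (cases "i = i0")
        case True
        have "(\<Sum>j\<in>I'. c' j * a j) \<in> A"
          using c'(1) aA unfolding I'_def by (intro Amod_sum[OF S.Amod_A] S.Amult) auto
        then show ?thesis using True S.Aneg unfolding c_def by simp
      next
        case False
        then have "i \<in> I'" using \<open>i \<in> I\<close> unfolding I'_def by blast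
        then show ?thesis using False S.Amult c'(1) aA[OF i0(1)] unfolding c_def by simp
      qed
    qed
    moreover have "\<exists>i\<in>I. c i \<noteq> 0"
    proof -
      obtain i where i: "i \<in> I'" "c' i \<noteq> 0" using c'(3) by blast
      then have ci: "c i = c' i * a i0" "i \<in> I" unfolding c_def I'_def by auto
      have "c i \<noteq> 0" unfolding ci(1) using i(2) i0(2) by simp
      then show ?thesis using ci(2) by blast
    qed
    ultimately show ?thesis by blast
  qed
qed

lemma rank_le:
  assumes sub: "is_subring A" and G: "finite G" and X: "finite X" "X \<subseteq> A_span A scale G" "A_indep A scale X"
  shows "card X \<le> card G"
proof (rule ccontr)
  assume "\<not> card X \<le> card G"
  then have "card G < card X" by simp
  then obtain c where c: "\<forall>i\<in>X. c i \<in> A" "(\<Sum>i\<in>X. c i *s i) = 0" "\<exists>i\<in>X. c i \<noteq> 0"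
    using rank_bound[OF sub G X(1), of "\<lambda>x. x"] X(2) by blast
  then show False using X(3) X(1) unfolding A_indep_def by blast
qed

lemma rank_ge:
  assumes sub: "is_subring A" and G: "finite G" "R = A_span A scale G"
    and X: "X \<subseteq> R" "finite X" "A_indep A scale X"
  shows "card X \<le> A_rank A scale R"
proof -
  let ?C = "{card X | X. X \<subseteq> R \<and> finite X \<and> A_indep A scale X}"
  have "?C \<subseteq> {..card G}" using rank_le[OF sub G(1)] G(2) by auto
  then have "finite ?C" using finite_subset by blast
  moreover have "card X \<in> ?C" using X by blast
  ultimately show ?thesis unfolding A_rank_def by (rule le_cSup_finite)
qed


lemma A_indep_of_indep: "independent B \<Longrightarrow> A_indep A scale B"
  unfolding A_indep_def using independentD by blast

lemma lattice_denom:
  assumes sub: "is_subring A" and L: "A_lattice A scale R"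
    and BR: "BR \<subseteq> R" "independent BR" "R \<subseteq> span BR"
  shows "\<exists>d\<in>A. d \<noteq> 0 \<and> (\<forall>r\<in>R. d *s r \<in> A_span A scale BR)"
proof -
  interpret S: subr A by (unfold_locales) (rule sub)
  have Rm: "A_submodule A scale R" and Rfg: "A_fin_gen A scale R"
    and Rrk: "dim (span R) = A_rank A scale R" using L unfolding A_lattice_def by auto
  obtain G where G: "finite G" "G \<subseteq> R" "R = A_span A scale G" using Rfg unfolding A_fin_gen_def by blast
  have RG: "R \<subseteq> span G" using G(3) Aspan_sub_span by blast
  have "BR \<subseteq> span G" using BR(1) RG by (rule order_trans)
  then have fBR: "finite BR" using independent_span_bound[OF G(1) BR(2)] by simp
  have sRB: "span R \<subseteq> span BR" using span_mono[OF BR(3)] by (simp add: span_span)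
  have "BR \<subseteq> span R" using BR(1) span_superset[of R] by (rule order_trans)
  then have "card BR = dim (span R)" by (rule basis_card_eq_dim[OF _ sRB BR(2)])
  then have cBR: "card BR = A_rank A scale R" using Rrk by simp
  note ABR = Aspan_mod[OF sub, of BR]
  have key: "\<exists>e\<in>A. e \<noteq> 0 \<and> e *s g \<in> A_span A scale BR" if g: "g \<in> R" for g
  proof (cases "g \<in> BR")
    case True
    have "(\<Sum>b\<in>BR. (if b = g then 1 else 0) *s b) = (\<Sum>b\<in>BR. if b = g then b else 0)"
      by (intro sum.cong) auto
    also have "\<dots> = g" using True fBR by simp
    finally have "(\<Sum>b\<in>BR. (if b = g then 1 else 0) *s b) = g" .
    then have "1 *s g \<in> A_span A scale BR" unfolding Aspan_mem
      by (intro exI[of _ "\<lambda>b. if b = g then 1 else 0"]) simp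
    then show ?thesis using S.A1 by (intro bexI[of _ 1]) simp_all
  next
    case False
    let ?X = "insert g BR"
    have "card ?X = card BR + 1" using False fBR by simp
    then have "\<not> A_indep A scale ?X"
      using rank_ge[OF sub G(1,3), of ?X] g BR(1) fBR cBR by auto
    then obtain Gs c where Gs: "finite Gs" "Gs \<subseteq> ?X" "\<forall>h\<in>Gs. c h \<in> A" "(\<Sum>h\<in>Gs. c h *s h) = 0"
      and nz: "\<exists>h\<in>Gs. c h \<noteq> 0" unfolding A_indep_def by blast
    let ?Gs' = "Gs - {g}"
    have sub': "?Gs' \<subseteq> BR" using Gs(2) by blast
    have gin: "g \<in> Gs \<and> c g \<noteq> 0"
    proof (rule ccontr)
      assume "\<not> (g \<in> Gs \<and> c g \<noteq> 0)"
      then have "(\<Sum>h\<in>Gs. c h *s h) = (\<Sum>h\<in>?Gs'. c h *s h)"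
        using Gs(1) by (cases "g \<in> Gs") (auto simp: sum.remove)
      then have "(\<Sum>h\<in>?Gs'. c h *s h) = 0" using Gs(4) by simp
      then have "\<forall>h\<in>?Gs'. c h = 0" using independentD[OF BR(2)] Gs(1) sub' by blast
      then show False using nz \<open>\<not> (g \<in> Gs \<and> c g \<noteq> 0)\<close> by blast
    qed
    have "(\<Sum>h\<in>Gs. c h *s h) = c g *s g + (\<Sum>h\<in>?Gs'. c h *s h)" using Gs(1) gin by (intro sum.remove) auto
    then have "0 = c g *s g + (\<Sum>h\<in>?Gs'. c h *s h)" using Gs(4) by simp
    then have eq: "c g *s g = - (\<Sum>h\<in>?Gs'. c h *s h)" by (simp add: eq_neg_iff_add_eq_0 add.commute)
    define a where "a b = (if b \<in> ?Gs' then - c b else 0)" for b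
    have "(\<Sum>b\<in>BR. a b *s b) = (\<Sum>b\<in>?Gs'. a b *s b)"
      using fBR sub' unfolding a_def by (intro sum.mono_neutral_cong_right) auto
    also have "\<dots> = (\<Sum>h\<in>?Gs'. (- c h) *s h)" unfolding a_def by (intro sum.cong) auto
    also have "\<dots> = c g *s g" unfolding eq by (simp add: scale_minus_left sum_negf)
    finally have "c g *s g = (\<Sum>b\<in>BR. a b *s b)" by simp
    moreover have "\<forall>b\<in>BR. a b \<in> A" unfolding a_def using Gs(3) S.Aneg by auto
    ultimately have "c g *s g \<in> A_span A scale BR" unfolding Aspan_mem by blast
    then show ?thesis using gin Gs(3) by blast
  qed
  have "\<forall>g\<in>G. \<exists>e. e \<in> A \<and> e \<noteq> 0 \<and> e *s g \<in> A_span A scale BR" using key G(2) by blast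
  then obtain e where e: "\<forall>g\<in>G. e g \<in> A \<and> e g \<noteq> 0 \<and> e g *s g \<in> A_span A scale BR"
    by (rule bchoice[elim_format]) blast
  define d where "d = (\<Prod>g\<in>G. e g)"
  have dA: "d \<in> A" unfolding d_def by (rule S.Aprod) (use e in blast)
  have d0: "d \<noteq> 0" unfolding d_def using e G(1) by simp
  have dg: "d *s g \<in> A_span A scale BR" if g: "g \<in> G" for g
  proof -
    have "d = e g * (\<Prod>h\<in>G - {g}. e h)" unfolding d_def using G(1) g by (simp add: prod.remove)
    then have deq: "d *s g = (\<Prod>h\<in>G - {g}. e h) *s (e g *s g)" by (simp add: mult.commute)
    have "(\<Prod>h\<in>G - {g}. e h) \<in> A" by (rule S.Aprod) (use e in blast)
    moreover have "e g *s g \<in> A_span A scale BR" using e g by blast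
    ultimately have "(\<Prod>h\<in>G - {g}. e h) *s (e g *s g) \<in> A_span A scale BR" by (rule Amod_scale_closed[OF ABR])
    then show ?thesis by (simp only: deq)
  qed
  have "d *s r \<in> A_span A scale BR" if r: "r \<in> R" for r
  proof -
    have "r \<in> A_span A scale G" using r G(3) by simp
    then obtain c where c: "\<forall>g\<in>G. c g \<in> A" "r = (\<Sum>g\<in>G. c g *s g)" unfolding Aspan_mem by blast
    have "d *s r = (\<Sum>g\<in>G. c g *s (d *s g))" unfolding c(2) by (simp add: scale_sum_right mult.commute)
    also have "\<dots> \<in> A_span A scale BR"
    proof (rule Amod_sum[OF ABR])
      fix g assume "g \<in> G"
      then show "c g *s (d *s g) \<in> A_span A scale BR" using Amod_scale_closed[OF ABR] c(1) dg by blast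
    qed
    finally show ?thesis .
  qed
  then show ?thesis using dA d0 by blast
qed
end


context subr begin

lemma sign_in_A: "of_int (sign p) \<in> A"
proof (cases rule: sign_cases[of p])
  case even then show ?thesis by simp
next
  case odd then show ?thesis using Aneg[OF A1] by simp
qed

lemma det_colon:
  assumes Sm: "Amod mS" and n: "0 < n"
    and h00: "m * M 0 0 \<in> mS" and hi0: "\<And>i. 0 < i \<Longrightarrow> i < n \<Longrightarrow> m * M i 0 \<in> A"
    and h0j: "\<And>j. 0 < j \<Longrightarrow> j < n \<Longrightarrow> M 0 j \<in> mS"
    and hij: "\<And>i j. 0 < i \<Longrightarrow> i < n \<Longrightarrow> 0 < j \<Longrightarrow> j < n \<Longrightarrow> M i j \<in> A"
  shows "m * lz_det n M \<in> mS"
proof -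
  have trm: "m * (\<Prod>i<n. M i (p i)) \<in> mS" if p: "p permutes {..<n}" for p
  proof -
    have inj: "inj p" using permutes_inj[OF p] .
    have img: "p ` {..<n} = {..<n}" using permutes_image[OF p] .
    have pin: "p i < n" if "i < n" for i using img that by blast
    have "0 \<in> p ` {..<n}" using img n by simp
    then obtain i0 where i0: "i0 < n" "p i0 = 0" by auto
    have pne: "p i \<noteq> 0" if "i \<noteq> i0" for i using i0(2) inj that by (metis injD)
    show ?thesis
    proof (cases "i0 = 0")
      case True
      let ?r = "\<Prod>i\<in>{..<n} - {0}. M i (p i)"
      have "(\<Prod>i<n. M i (p i)) = M 0 (p 0) * ?r" using n by (simp add: prod.remove)
      moreover have "?r \<in> A"
      proof (rule Aprod)
        fix i assume "i \<in> {..<n} - {0}"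
        then show "M i (p i) \<in> A" using hij pin pne True by auto
      qed
      ultimately have eq: "m * (\<Prod>i<n. M i (p i)) = ?r * (m * M 0 0)" using True i0(2) by simp
      have "?r * (m * M 0 0) \<in> mS" using Amod_closed(3)[OF Sm \<open>?r \<in> A\<close> h00] .
      then show ?thesis by (simp only: eq)
    next
      case False
      let ?r = "\<Prod>i\<in>{..<n} - {i0} - {0}. M i (p i)"
      have "(\<Prod>i<n. M i (p i)) = M i0 (p i0) * (\<Prod>i\<in>{..<n} - {i0}. M i (p i))"
        using i0(1) by (simp add: prod.remove)
      also have "(\<Prod>i\<in>{..<n} - {i0}. M i (p i)) = M 0 (p 0) * ?r"
        using n False by (intro prod.remove) auto
      finally have e: "m * (\<Prod>i<n. M i (p i)) = ((m * M i0 0) * ?r) * M 0 (p 0)"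
        using i0(2) by (simp add: algebra_simps)
      have "?r \<in> A"
      proof (rule Aprod)
        fix i assume "i \<in> {..<n} - {i0} - {0}"
        then show "M i (p i) \<in> A" using hij pin pne by auto
      qed
      moreover have "m * M i0 0 \<in> A" using hi0 False i0(1) by simp
      moreover have "M 0 (p 0) \<in> mS" using h0j pin n pne False by simp
      ultimately show ?thesis unfolding e using Amod_closed(3)[OF Sm] Amult by blast
    qed
  qed
  have "m * lz_det n M = (\<Sum>p | p permutes {..<n}. of_int (sign p) * (m * (\<Prod>i<n. M i (p i))))"
    unfolding lz_det_def by (simp add: sum_distrib_left algebra_simps)
  also have "\<dots> \<in> mS"
  proof (rule Amod_sum[OF Sm])
    fix p assume "p \<in> {p. p permutes {..<n}}"
    then show "of_int (sign p) * (m * (\<Prod>i<n. M i (p i))) \<in> mS"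
      using Amod_closed(3)[OF Sm sign_in_A trm] by simp
  qed
  finally show ?thesis .
qed

end


context vector_space begin

lemma lat_gen:
  assumes "A_lattice A scale R"
  obtains G where "finite G" "G \<subseteq> R" "R = A_span A scale G" "R \<subseteq> span G" "A_submodule A scale R"
proof -
  obtain G where G: "finite G" "G \<subseteq> R" "R = A_span A scale G"
    using assms unfolding A_lattice_def A_fin_gen_def by blast
  moreover have "R \<subseteq> span G" using G(3) Aspan_sub_span by blast
  moreover have "A_submodule A scale R" using assms unfolding A_lattice_def by blast
  ultimately show ?thesis using that by blast
qed

lemma det_zero_of_kernel:
  assumes G: "finite G" "W \<subseteq> span G" and W: "subspace W" and u: "is_endo scale W u"
    and x: "x \<in> W" "x \<noteq> 0" "u x = 0"
  shows "endo_det scale W u = 0"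
proof -
  obtain b where b: "indexed_basis scale W (dim W) b" using ib_exists[OF G W] by blast
  show ?thesis
  proof (rule ccontr)
    assume "endo_det scale W u \<noteq> 0"
    then have "lz_det (dim W) (coord_matrix scale (dim W) b (\<lambda>j. u (b j))) \<noteq> 0"
      using endo_det_eq[OF b u] by simp
    then have "x = 0" using det_inj[OF b u _ x(1,3)] by blast
    then show False using x(2) by simp
  qed
qed

lemma endo_span_image:
  assumes W: "subspace W" and u: "is_endo scale W u" and R: "R \<subseteq> W" "u ` R \<subseteq> S"
  shows "u ` span R \<subseteq> span S"
proof
  fix z assume "z \<in> u ` span R"
  then obtain x where x: "x \<in> span R" "z = u x" by blast
  then obtain t r where t: "finite t" "t \<subseteq> R" "x = (\<Sum>a\<in>t. r a *s a)" unfolding span_explicit by blast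
  have "u x = (\<Sum>a\<in>t. r a *s u a)"
    unfolding t(3) using endo_lin[OF u W, of t "\<lambda>a. a" r] t R(1) by blast
  also have "\<dots> \<in> span S" using t R(2) by (intro span_sum span_scale span_base) blast
  finally show "z \<in> span S" using x(2) by simp
qed

lemma endo_diff:
  assumes W: "subspace W" and u: "is_endo scale W u" and xy: "x \<in> W" "y \<in> W"
  shows "u (x - y) = u x - u y"
proof -
  have "(-1) *s y \<in> W" using W xy(2) by (rule subspace_scale)
  then have "u (x + (-1) *s y) = u x + u ((-1) *s y)" using u xy(1) unfolding is_endo_def by blast
  also have "u ((-1) *s y) = (-1) *s u y" using u xy(2) unfolding is_endo_def by blast
  finally show ?thesis by (simp add: scale_minus_left)
qed

lemma inj_image_indep:
  assumes W: "subspace W" and u: "is_endo scale W u" and inj: "\<And>x. x \<in> W \<Longrightarrow> u x = 0 \<Longrightarrow> x = 0"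
    and B: "B \<subseteq> W" "finite B" "independent B"
  shows "independent (u ` B)" "card (u ` B) = card B"
proof -
  have injB: "inj_on u B"
  proof (rule inj_onI)
    fix x y assume xy: "x \<in> B" "y \<in> B" "u x = u y"
    have "x \<in> W" "y \<in> W" using xy B(1) by auto
    then have "u (x - y) = u x - u y" by (rule endo_diff[OF W u])
    then have "u (x - y) = 0" using xy(3) by simp
    moreover have "x - y \<in> W" using xy B(1) W by (auto intro: subspace_diff)
    ultimately have "x - y = 0" using inj by blast
    then show "x = y" by simp
  qed
  then show "card (u ` B) = card B" by (rule card_image)
  show "independent (u ` B)"
  proof (rule independent_if_scalars_zero)
    show "finite (u ` B)" using B(2) by simp
    fix f z assume sum0: "(\<Sum>y\<in>u ` B. f y *s y) = 0" and z: "z \<in> u ` B"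
    have "(\<Sum>y\<in>u ` B. f y *s y) = (\<Sum>b\<in>B. f (u b) *s u b)"
      using sum.reindex[OF injB, of "\<lambda>y. f y *s y"] by simp
    also have "\<dots> = u (\<Sum>b\<in>B. f (u b) *s b)"
    proof -
      have "\<And>k. k \<in> B \<Longrightarrow> k \<in> W" using B(1) by blast
      from endo_lin[OF u W this B(2), where c="\<lambda>b. f (u b)"] show ?thesis by simp
    qed
    finally have "u (\<Sum>b\<in>B. f (u b) *s b) = 0" using sum0 by simp
    moreover have "(\<Sum>b\<in>B. f (u b) *s b) \<in> W" using B(1) W by (intro subspace_sum subspace_scale) auto
    ultimately have "(\<Sum>b\<in>B. f (u b) *s b) = 0" using inj by blast
    then have "\<forall>b\<in>B. f (u b) = 0" using independentD[OF B(3) B(2) order_refl, of "\<lambda>b. f (u b)"] by blast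
    then show "f z = 0" using z by blast
  qed
qed

lemma index_unfold:
  "index_module scale R S = {endo_det scale (span (R \<union> S)) u | u. is_endo scale (span (R \<union> S)) u \<and> u ` R \<subseteq> S}"
  unfolding index_module_def Let_def span_Un[symmetric] by simp

lemma case1:
  assumes LR: "A_lattice A scale R" "R \<noteq> {0}" and LS: "A_lattice A scale S"
    and lt: "lat_dim scale S < lat_dim scale R"
  shows "index_module scale R S = {0}"
proof -
  obtain GR where GR: "finite GR" "GR \<subseteq> R" "R = A_span A scale GR" "R \<subseteq> span GR" "A_submodule A scale R"
    by (rule lat_gen[OF LR(1)])
  obtain GS where GS: "finite GS" "GS \<subseteq> S" "S = A_span A scale GS" "S \<subseteq> span GS" "A_submodule A scale S"
    by (rule lat_gen[OF LS])
  define W where "W = span (R \<union> S)"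
  have fG: "finite (GR \<union> GS)" using GR GS by simp
  have WG: "W \<subseteq> span (GR \<union> GS)" unfolding W_def
    using GR(4) GS(4) span_mono[of GR "GR \<union> GS"] span_mono[of GS "GR \<union> GS"]
    by (intro span_minimal) auto
  have Ws: "subspace W" unfolding W_def by simp
  have RW: "R \<subseteq> W" "span R \<subseteq> W" unfolding W_def using span_mono[of R "R \<union> S"] span_superset[of "R \<union> S"] by auto
  obtain r where r: "r \<in> R" "r \<noteq> 0" using LR(2) GR(5) unfolding A_submodule_def by blast
  have zero: "endo_det scale W u = 0" if u: "is_endo scale W u" "u ` R \<subseteq> S" for u
  proof (rule ccontr)
    assume nz: "endo_det scale W u \<noteq> 0"
    have inj: "x = 0" if "x \<in> W" "u x = 0" for x
      using det_zero_of_kernel[OF fG WG Ws u(1) that(1) _ that(2)] nz by blast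
    obtain B where B: "B \<subseteq> span R" "independent B" "span R \<subseteq> span B" "card B = dim (span R)"
      by (rule basis_exists)
    have BW: "B \<subseteq> W" using B(1) RW(2) by blast
    have fB: "finite B" using indep_card_le(1)[OF fG WG B(2) BW] .
    have "u ` B \<subseteq> span S" using endo_span_image[OF Ws u(1) RW(1) u(2)] B(1) by blast
    moreover have "independent (u ` B)" "card (u ` B) = card B" using inj_image_indep[OF Ws u(1) inj BW fB B(2)] by auto
    ultimately have "card B \<le> dim (span S)" using indep_card_le(2)[OF GS(1), of "span S" "u ` B"] GS(4)
      span_mono[of S "span GS"] by (simp add: span_span)
    then show False using lt B(4) unfolding lat_dim_def by simp
  qed
  have z: "is_endo scale W (\<lambda>_. 0)" unfolding is_endo_def using subspace_0[OF Ws] by auto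
  moreover have "(\<lambda>_. 0) ` R \<subseteq> S" using GS(5) r(1) unfolding A_submodule_def by auto
  ultimately have "0 \<in> index_module scale R S" unfolding index_unfold W_def[symmetric] using zero by force
  moreover have "index_module scale R S \<subseteq> {0}" unfolding index_unfold W_def[symmetric] using zero by blast
  ultimately show ?thesis by blast
qed

end


context vector_space begin

lemma split_sum0:
  fixes n :: nat
  assumes n: "0 < n"
  shows "(\<Sum>k<n. c k *s b k) = c 0 *s b 0 + (\<Sum>i\<in>{1..<n}. c i *s b i)"
proof -
  have "{..<n} = insert 0 {1..<n}" using n by (auto simp: not_less_eq_eq)
  then show ?thesis by simp
qed

lemma decomp_mem:
  assumes b: "indexed_basis scale W n b" and n: "0 < n"
    and R: "R = {x *s b 0 + (\<Sum>i\<in>{1..<n}. a i *s b i) | x a. x \<in> m \<and> (\<forall>i\<in>{1..<n}. a i \<in> A)}"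
  shows "v \<in> R \<longleftrightarrow> v \<in> W \<and> representation (b ` {..<n}) v (b 0) \<in> m
          \<and> (\<forall>i\<in>{1..<n}. representation (b ` {..<n}) v (b i) \<in> A)"
proof
  note bp = ib_props[OF b]
  assume "v \<in> R"
  then obtain x a where xa: "v = x *s b 0 + (\<Sum>i\<in>{1..<n}. a i *s b i)" "x \<in> m" "\<forall>i\<in>{1..<n}. a i \<in> A"
    unfolding R by blast
  define c where "c k = (if k = 0 then x else a k)" for k
  have "v = (\<Sum>k<n. c k *s b k)" unfolding xa(1) split_sum0[OF n] c_def by simp
  moreover have "(\<Sum>k<n. c k *s b k) \<in> W" using bp(4,5) by (intro subspace_sum subspace_scale) auto
  moreover have "representation (b ` {..<n}) (\<Sum>k<n. c k *s b k) (b i) = c i" if "i < n" for i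
    by (rule rep_sum_idx[OF b that])
  ultimately show "v \<in> W \<and> representation (b ` {..<n}) v (b 0) \<in> m
          \<and> (\<forall>i\<in>{1..<n}. representation (b ` {..<n}) v (b i) \<in> A)"
    using n xa(2,3) unfolding c_def by auto
next
  assume h: "v \<in> W \<and> representation (b ` {..<n}) v (b 0) \<in> m
          \<and> (\<forall>i\<in>{1..<n}. representation (b ` {..<n}) v (b i) \<in> A)"
  let ?c = "\<lambda>k. representation (b ` {..<n}) v (b k)"
  have "v = (\<Sum>k<n. ?c k *s b k)" using expand_idx[OF b] h by blast
  also have "\<dots> = ?c 0 *s b 0 + (\<Sum>i\<in>{1..<n}. ?c i *s b i)" by (rule split_sum0[OF n])
  finally have "v = ?c 0 *s b 0 + (\<Sum>i\<in>{1..<n}. ?c i *s b i)" .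
  then show "v \<in> R" unfolding R using h by (intro CollectI exI[of _ "?c 0"] exI[of _ ?c]) blast
qed

lemma case3:
  assumes ded: "dedekind_subring A"
    and LR: "A_lattice A scale R" "R \<noteq> {0}" and LS: "A_lattice A scale S"
    and eqs: "span S = span R"
    and dR: "lattice_decomp A scale R mR bR" and dS: "lattice_decomp A scale S mS bS"
  shows "index_module scale R S =
     (\<lambda>x. x * lz_det (lat_dim scale R) (coord_matrix scale (lat_dim scale R) bR bS)) ` mod_mult A mS (frac_inv A mR)"
proof -
  have sub: "is_subring A" using ded unfolding dedekind_subring_def by blast
  interpret D: ded A by unfold_locales (use sub ded in auto)
  define n where "n = lat_dim scale R"
  define W where "W = span R"
  have nW: "dim W = n" unfolding n_def W_def lat_dim_def by simp
  have nS: "lat_dim scale S = n" unfolding n_def lat_dim_def eqs by simp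
  have RS: "span (R \<union> S) = W"
  proof
    show "span (R \<union> S) \<subseteq> W" unfolding W_def using eqs span_superset[of S] span_superset[of R]
      by (intro span_minimal) auto
    show "W \<subseteq> span (R \<union> S)" unfolding W_def by (rule span_mono) blast
  qed
  have Rm: "A_submodule A scale R" and Sm: "A_submodule A scale S" using LR(1) LS unfolding A_lattice_def by auto
  have fR: "fractional_ideal A mR" and bR: "indexed_basis scale W n bR"
    and Rdec: "R = {x *s bR 0 + (\<Sum>i\<in>{1..<n}. a i *s bR i) | x a. x \<in> mR \<and> (\<forall>i\<in>{1..<n}. a i \<in> A)}"
    using dR unfolding lattice_decomp_def n_def W_def by auto
  have fS: "fractional_ideal A mS" and bS: "indexed_basis scale W n bS"
    and Sdec: "S = {x *s bS 0 + (\<Sum>i\<in>{1..<n}. a i *s bS i) | x a. x \<in> mS \<and> (\<forall>i\<in>{1..<n}. a i \<in> A)}"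
    using dS nS unfolding lattice_decomp_def W_def eqs by auto
  note bRp = ib_props[OF bR] and bSp = ib_props[OF bS]
  have n0: "0 < n"
  proof (rule ccontr)
    assume "\<not> 0 < n"
    then have "W = {0}" using bRp(3) by simp
    then have "R \<subseteq> {0}" unfolding W_def using span_superset[of R] by blast
    moreover have "0 \<in> R" using Rm unfolding A_submodule_def by blast
    ultimately show False using LR(2) by blast
  qed
  have mS_mod: "A_submodule A (*) mS" using fS unfolding fractional_ideal_def by blast
  have mR0: "0 \<in> mR" using fR unfolding fractional_ideal_def A_submodule_def by blast
  note memR = decomp_mem[OF bR n0 Rdec] and memS = decomp_mem[OF bS n0 Sdec]
  let ?D = "lz_det n (coord_matrix scale n bR bS)"
  let ?I = "mod_mult A mS (frac_inv A mR)"
  have colon: "x \<in> ?I \<longleftrightarrow> (\<forall>m\<in>mR. x * m \<in> mS)" for x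
    using D.colon_eq[OF fR fS] by blast
  have Ws: "subspace W" using bRp(4) .
  have idx: "index_module scale R S = {endo_det scale W u | u. is_endo scale W u \<and> u ` R \<subseteq> S}"
    unfolding index_unfold RS ..
  have sub1: "endo_det scale W u \<in> (\<lambda>x. x * ?D) ` ?I" if u: "is_endo scale W u" "u ` R \<subseteq> S" for u
  proof -
    define M where "M = coord_matrix scale n bS (\<lambda>j. u (bR j))"
    have uW: "u (bR j) \<in> W" if "j < n" for j using u(1) bRp(5)[OF that] unfolding is_endo_def by blast
    have "endo_det scale W u = lz_det n (coord_matrix scale n bR (\<lambda>j. u (bR j)))"
      using endo_det_eq[OF bR[folded nW] u(1)] nW by simp
    also have "\<dots> = lz_det n (mm n (coord_matrix scale n bR bS) M)"
    proof (rule lz_det_cong)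
      fix i j assume "i < n" "j < n"
      from coord_comp[OF bR bS endo_id[OF Ws] uW this]
      show "coord_matrix scale n bR (\<lambda>j. u (bR j)) i j = mm n (coord_matrix scale n bR bS) M i j"
        unfolding M_def by simp
    qed
    also have "\<dots> = ?D * lz_det n M" by (rule lz_det_mult)
    finally have e: "endo_det scale W u = lz_det n M * ?D" by simp
    have cj: "M 0 j \<in> mS \<and> (\<forall>i\<in>{1..<n}. M i j \<in> A)" if j: "0 < j" "j < n" for j
    proof -
      have "bR j \<in> R"
        unfolding memR using bRp(5)[OF j(2)] rep_basis_idx[OF bR j(2)] j mR0 D.A0 D.A1 by auto
      then have "u (bR j) \<in> S" using u(2) by blast
      then show ?thesis unfolding memS M_def coord_matrix_def by blast
    qed
    have c0: "m * M 0 0 \<in> mS \<and> (\<forall>i\<in>{1..<n}. m * M i 0 \<in> A)" if m: "m \<in> mR" for m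
    proof -
      have b0: "bR 0 \<in> span (bR ` {..<n})" using n0 by (intro span_base) auto
      have "representation (bR ` {..<n}) (m *s bR 0) (bR i) = m * (if i = 0 then 1 else 0)" if "i < n" for i
        using representation_scale[OF bRp(2) b0, of m] rep_basis_idx[OF bR n0 that] by simp
      then have "m *s bR 0 \<in> R"
        unfolding memR using m n0 bRp(4,5) D.A0 by (auto intro: subspace_scale)
      then have "u (m *s bR 0) \<in> S" using u(2) by blast
      moreover have "u (m *s bR 0) = m *s u (bR 0)" using u(1) bRp(5)[OF n0] unfolding is_endo_def by blast
      ultimately have mu: "m *s u (bR 0) \<in> S" by simp
      have u0: "u (bR 0) \<in> span (bS ` {..<n})" using uW[OF n0] bSp(3) by simp
      have "representation (bS ` {..<n}) (m *s u (bR 0)) (bS i) = m * M i 0" for i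
        unfolding M_def coord_matrix_def using representation_scale[OF bSp(2) u0, of m] by simp
      then show ?thesis using mu unfolding memS by auto
    qed
    have "\<forall>m\<in>mR. lz_det n M * m \<in> mS"
    proof
      fix m assume m: "m \<in> mR"
      have "m * lz_det n M \<in> mS"
        by (rule D.det_colon[OF mS_mod n0]) (use c0[OF m] cj in auto)
      then show "lz_det n M * m \<in> mS" by (simp add: mult.commute)
    qed
    then have "lz_det n M \<in> ?I" using colon by blast
    then show ?thesis unfolding e by blast
  qed
  have sub2: "z \<in> {endo_det scale W u | u. is_endo scale W u \<and> u ` R \<subseteq> S}" if z: "z \<in> (\<lambda>x. x * ?D) ` ?I" for z
  proof -
    obtain x where x: "x \<in> ?I" "z = x * ?D" using z by blast
    have xm: "x * m \<in> mS" if "m \<in> mR" for m using x(1) colon that by blast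
    define w where "w j = (if j = 0 then x *s bS 0 else bS j)" for j
    define u where "u = mkmap scale bR n w"
    have wW: "w j \<in> W" if "j < n" for j unfolding w_def using bSp(5)[OF that] bSp(5)[OF n0] Ws
      by (auto intro: subspace_scale)
    have ue: "is_endo scale W u" unfolding u_def by (rule mk_endo[OF bR wW])
    have uR: "u ` R \<subseteq> S"
    proof
      fix y assume "y \<in> u ` R"
      then obtain r where r: "r \<in> R" "y = u r" by blast
      let ?c = "\<lambda>k. representation (bR ` {..<n}) r (bR k)"
      have rc: "r \<in> W" "?c 0 \<in> mR" "\<forall>i\<in>{1..<n}. ?c i \<in> A" using r(1) unfolding memR by auto
      have "r = (\<Sum>k<n. ?c k *s bR k)" using expand_idx[OF bR rc(1)] .
      then have "u r = (\<Sum>k<n. ?c k *s w k)" unfolding u_def using mk_sum[OF bR] by metis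
      also have "\<dots> = (\<Sum>k<n. (if k = 0 then ?c 0 * x else ?c k) *s bS k)"
        unfolding w_def by (intro sum.cong) auto
      finally have ur: "u r = (\<Sum>k<n. (if k = 0 then ?c 0 * x else ?c k) *s bS k)" .
      have "u r \<in> W" using ue rc(1) unfolding is_endo_def by blast
      moreover have "representation (bS ` {..<n}) (u r) (bS i) = (if i = 0 then ?c 0 * x else ?c i)" if "i < n" for i
        unfolding ur by (rule rep_sum_idx[OF bS that])
      ultimately have "u r \<in> S" unfolding memS using rc n0 xm[OF rc(2)] by (auto simp: mult.commute)
      then show "y \<in> S" using r(2) by simp
    qed
    have "endo_det scale W u = lz_det n (coord_matrix scale n bR (\<lambda>j. u (bR j)))"
      using endo_det_eq[OF bR[folded nW] ue] nW by simp
    also have "\<dots> = lz_det n (\<lambda>i j. coord_matrix scale n bR bS i j * (if j = 0 then x else 1))"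
    proof (rule lz_det_cong)
      fix i j assume ij: "i < n" "j < n"
      have "u (bR j) = w j" unfolding u_def by (rule mk_basis[OF bR ij(2)])
      moreover have b0: "bS 0 \<in> span (bR ` {..<n})" using bSp(5)[OF n0] bRp(3) by simp
      ultimately show "coord_matrix scale n bR (\<lambda>j. u (bR j)) i j = coord_matrix scale n bR bS i j * (if j = 0 then x else 1)"
        unfolding coord_matrix_def w_def using representation_scale[OF bRp(2) b0, of x] by (simp add: mult.commute)
    qed
    also have "\<dots> = ?D * (\<Prod>j<n. if j = 0 then x else 1)" by (rule lz_det_scale_cols)
    also have "(\<Prod>j<n. if j = 0 then x else 1) = x" using n0 by (simp add: prod.If_cases)
    finally have "endo_det scale W u = z" using x(2) by (simp add: mult.commute)
    then show ?thesis using ue uR by blast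
  qed
  show ?thesis unfolding idx n_def[symmetric] using sub1 sub2 by blast
qed

end


context vector_space begin

lemma indexed_from_set:
  assumes "finite B"
  obtains x where "inj_on x {..<card B}" "x ` {..<card B} = B"
proof -
  obtain x where "bij_betw x {0..<card B} B" using ex_bij_betw_nat_finite[OF assms] by blast
  then show ?thesis using that by (auto simp: bij_betw_def atLeast0LessThan)
qed

lemma case2:
  assumes sub: "is_subring A"
    and LR: "A_lattice A scale R" "R \<noteq> {0}" and LS: "A_lattice A scale S"
    and le: "lat_dim scale R \<le> lat_dim scale S" and ne: "span S \<noteq> span R"
  shows "index_module scale R S = UNIV"
proof -
  interpret SA: subr A by unfold_locales (rule sub)
  obtain GR where GR: "finite GR" "GR \<subseteq> R" "R = A_span A scale GR" "R \<subseteq> span GR" "A_submodule A scale R"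
    by (rule lat_gen[OF LR(1)])
  obtain GS where GS: "finite GS" "GS \<subseteq> S" "S = A_span A scale GS" "S \<subseteq> span GS" "A_submodule A scale S"
    by (rule lat_gen[OF LS])
  define W where "W = span (R \<union> S)"
  have fG: "finite (GR \<union> GS)" using GR GS by simp
  have WG: "W \<subseteq> span (GR \<union> GS)" unfolding W_def
    using GR(4) GS(4) span_mono[of GR "GR \<union> GS"] span_mono[of GS "GR \<union> GS"]
    by (intro span_minimal) auto
  have Ws: "subspace W" unfolding W_def by simp
  have RW: "R \<subseteq> W" "span R \<subseteq> W" unfolding W_def using span_mono[of R "R \<union> S"] span_superset[of "R \<union> S"] by auto
  have SW: "S \<subseteq> W" "span S \<subseteq> W" unfolding W_def using span_mono[of S "R \<union> S"] span_superset[of "R \<union> S"] by auto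
  define dR where "dR = dim (span R)"
  define dS where "dS = dim (span S)"
  define N where "N = dim W"
  have dRS: "dR \<le> dS" using le unfolding dR_def dS_def lat_dim_def .
  have sRG: "span R \<subseteq> span GR" using span_mono[OF GR(4)] by (simp add: span_span)
  have sSG: "span S \<subseteq> span GS" using span_mono[OF GS(4)] by (simp add: span_span)
  obtain BR where BR: "BR \<subseteq> R" "independent BR" "R \<subseteq> span BR" by (rule maximal_independent_subset)
  have fBR: "finite BR" using indep_card_le(1)[OF GR(1) sRG BR(2)] BR(1) span_superset[of R] by blast
  have sRB: "span R \<subseteq> span BR" using span_mono[OF BR(3)] by (simp add: span_span)
  have "BR \<subseteq> span R" using BR(1) span_superset[of R] by blast
  then have cBR: "card BR = dR" unfolding dR_def by (rule basis_card_eq_dim[OF _ sRB BR(2)])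
  obtain BS where BS: "BS \<subseteq> S" "independent BS" "S \<subseteq> span BS" by (rule maximal_independent_subset)
  have fBS: "finite BS" using indep_card_le(1)[OF GS(1) sSG BS(2)] BS(1) span_superset[of S] by blast
  have sSB: "span S \<subseteq> span BS" using span_mono[OF BS(3)] by (simp add: span_span)
  have "BS \<subseteq> span S" using BS(1) span_superset[of S] by blast
  then have cBS: "card BS = dS" unfolding dS_def by (rule basis_card_eq_dim[OF _ sSB BS(2)])
  obtain d where d: "d \<in> A" "d \<noteq> 0" "\<forall>r\<in>R. d *s r \<in> A_span A scale BR"
    using lattice_denom[OF sub LR(1) BR] by blast
  obtain x where x: "inj_on x {..<dR}" "x ` {..<dR} = BR" using indexed_from_set[OF fBR] cBR by metis
  obtain y where y: "inj_on y {..<dS}" "y ` {..<dS} = BS" using indexed_from_set[OF fBS] cBS by metis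
  have ylt: "y k \<in> S" if "k < dR" for k using y(2) BS(1) dRS that by auto
  have dRN: "dR < N"
  proof (rule ccontr)
    assume "\<not> dR < N"
    moreover have "dR \<le> N" unfolding N_def using indep_card_le(2)[OF fG WG BR(2)] BR(1) RW(1) cBR by blast
    ultimately have "card BR = dim W" using cBR unfolding N_def by simp
    then have "W \<subseteq> span BR" using indep_card_eq_span[OF fG WG BR(2)] BR(1) RW(1) by blast
    then have SR: "span S \<subseteq> span R" using SW(2) span_mono[OF BR(1)] by blast
    have "BS \<subseteq> span R" using BS(1) span_superset[of S] SR by blast
    then have "card BS \<le> dim (span R)" using indep_card_le(2)[OF GR(1) sRG BS(2)] by blast
    then have "card BS = dim (span R)" using cBS dRS unfolding dR_def by simp
    then have "span R \<subseteq> span BS" using indep_card_eq_span[OF GR(1) sRG BS(2) \<open>BS \<subseteq> span R\<close>] by blast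
    then have "span R \<subseteq> span S" using span_mono[OF BS(1)] by (simp add: span_span)
    then show False using SR ne by blast
  qed
  obtain e where e: "indexed_basis scale W N e" "\<forall>k<dR. e k = x k"
    using ib_ext[OF fG WG Ws x(1)] x(2) BR(2) BR(1) RW(1) unfolding N_def by auto
  define z where "z k = d *s y k" for k
  have zinj: "inj_on z {..<dR}"
  proof (rule inj_onI)
    fix i j assume "i \<in> {..<dR}" "j \<in> {..<dR}" "z i = z j"
    then have "y i = y j" unfolding z_def using d(2) by simp
    then show "i = j" using y(1) \<open>i \<in> {..<dR}\<close> \<open>j \<in> {..<dR}\<close> dRS by (auto dest: inj_onD)
  qed
  have zimg: "z ` {..<dR} = (\<lambda>v. d *s v) ` (y ` {..<dR})" unfolding z_def by auto
  have ysub: "y ` {..<dR} \<subseteq> BS" using y(2) dRS by auto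
  have scend: "is_endo scale W (\<lambda>v. d *s v)" unfolding is_endo_def using Ws
    by (auto simp: subspace_scale scale_right_distrib scale_left_commute)
  have "independent (z ` {..<dR})"
    unfolding zimg using inj_image_indep(1)[OF Ws scend _ _ _ independent_mono[OF BS(2) ysub]] d(2)
      ysub BS(1) SW(1) by auto
  moreover have "z ` {..<dR} \<subseteq> W" unfolding z_def using ylt SW(1) Ws by (auto intro: subspace_scale)
  ultimately obtain f where f: "indexed_basis scale W N f" "\<forall>k<dR. f k = d *s y k"
    using ib_ext[OF fG WG Ws zinj] unfolding N_def z_def by blast
  note ep = ib_props[OF e(1)] and fp = ib_props[OF f(1)]
  let ?det0 = "lz_det N (coord_matrix scale N e f)"
  have det0: "?det0 \<noteq> 0"
  proof
    assume h: "?det0 = 0"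
    define v where "v = mkmap scale f N e"
    have ve: "is_endo scale W v" unfolding v_def by (rule mk_endo[OF f(1) ep(5)])
    have "lz_det N (coord_matrix scale N e e) = lz_det N (mm N (coord_matrix scale N e (\<lambda>j. v (e j))) (coord_matrix scale N e f))"
    proof (rule lz_det_cong)
      fix i j assume ij: "i < N" "j < N"
      have fW: "\<And>j. j < N \<Longrightarrow> f j \<in> W" using fp(5) .
      have "v (f j) = e j" unfolding v_def by (rule mk_basis[OF f(1) ij(2)])
      with coord_comp[where w=f, OF e(1) e(1) ve fW ij] show "coord_matrix scale N e e i j = mm N (coord_matrix scale N e (\<lambda>j. v (e j))) (coord_matrix scale N e f) i j"
        unfolding coord_matrix_def by simp
    qed
    also have "\<dots> = 0" using h by (simp add: lz_det_mult)
    finally have "lz_det N (coord_matrix scale N e e) = 0" .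
    moreover have "lz_det N (coord_matrix scale N e e) = 1"
      using coord_id[OF e(1)] lz_det_cong[of N "coord_matrix scale N e e" "\<lambda>i j. if i = j then 1 else 0"] lz_det_id by simp
    ultimately show False by simp
  qed
  have all: "c \<in> {endo_det scale W u | u. is_endo scale W u \<and> u ` R \<subseteq> S}" for c
  proof -
    define t where "t = c / ?det0"
    define w where "w k = (if k = N - 1 then t *s f k else f k)" for k
    define u where "u = mkmap scale e N w"
    have wW: "w k \<in> W" if "k < N" for k unfolding w_def using fp(5)[OF that] Ws by (auto intro: subspace_scale)
    have ue: "is_endo scale W u" unfolding u_def by (rule mk_endo[OF e(1) wW])
    have "endo_det scale W u = lz_det N (coord_matrix scale N e (\<lambda>j. u (e j)))"
      using endo_det_eq[OF e(1)[unfolded N_def] ue] unfolding N_def by simp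
    also have "\<dots> = lz_det N (\<lambda>i j. coord_matrix scale N e f i j * (if j = N - 1 then t else 1))"
    proof (rule lz_det_cong)
      fix i j assume ij: "i < N" "j < N"
      have "u (e j) = w j" unfolding u_def by (rule mk_basis[OF e(1) ij(2)])
      moreover have fj: "f j \<in> span (e ` {..<N})" using fp(5)[OF ij(2)] ep(3) by simp
      ultimately have cm: "coord_matrix scale N e (\<lambda>j. u (e j)) i j = representation (e ` {..<N}) (w j) (e i)"
        unfolding coord_matrix_def by simp
      have rs: "representation (e ` {..<N}) (t *s f j) (e i) = t * representation (e ` {..<N}) (f j) (e i)"
        using representation_scale[OF ep(2) fj, of t] by simp
      show "coord_matrix scale N e (\<lambda>j. u (e j)) i j = coord_matrix scale N e f i j * (if j = N - 1 then t else 1)"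
      proof (cases "j = N - 1")
        case True
        then have "w j = t *s f j" unfolding w_def by simp
        then show ?thesis unfolding cm using rs True by (simp add: coord_matrix_def mult.commute)
      next
        case False
        then have "w j = f j" unfolding w_def by simp
        then show ?thesis unfolding cm using False by (simp add: coord_matrix_def)
      qed
    qed
    also have "\<dots> = ?det0 * (\<Prod>j<N. if j = N - 1 then t else 1)" by (rule lz_det_scale_cols)
    also have "(\<Prod>j<N. if j = N - 1 then t else 1) = t" using dRN by (simp add: prod.If_cases)
    finally have detc: "endo_det scale W u = c" unfolding t_def using det0 by simp
    have uR: "u ` R \<subseteq> S"
    proof
      fix q assume "q \<in> u ` R"
      then obtain r where r: "r \<in> R" "q = u r" by blast
      have "d *s r \<in> A_span A scale BR" using d(3) r(1) by blast
      then obtain a where a: "\<forall>b\<in>BR. a b \<in> A" "d *s r = (\<Sum>b\<in>BR. a b *s b)" unfolding Aspan_mem by blast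
      have "d *s r = (\<Sum>k<dR. a (x k) *s x k)"
        unfolding a(2) using sum.reindex[OF x(1), of "\<lambda>b. a b *s b"] x(2) by simp
      also have "\<dots> = (\<Sum>k<dR. a (x k) *s e k)" using e(2) by simp
      finally have dr: "d *s r = (\<Sum>k<dR. a (x k) *s e k)" .
      have ekW: "\<And>k. k \<in> {..<dR} \<Longrightarrow> e k \<in> W" using ep(5) dRN by auto
      have "u (d *s r) = (\<Sum>k<dR. a (x k) *s u (e k))"
        unfolding dr by (rule endo_lin[OF ue Ws ekW finite_lessThan])
      also have "\<dots> = (\<Sum>k<dR. a (x k) *s (d *s y k))"
      proof (rule sum.cong)
        fix k assume k: "k \<in> {..<dR}"
        then have "u (e k) = w k" unfolding u_def using mk_basis[OF e(1)] dRN by auto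
        moreover have "k \<noteq> N - 1" using k dRN by auto
        ultimately show "a (x k) *s u (e k) = a (x k) *s (d *s y k)" unfolding w_def using f(2) k by auto
      qed simp
      also have "\<dots> = d *s (\<Sum>k<dR. a (x k) *s y k)" by (simp add: scale_sum_right mult.commute)
      finally have "u (d *s r) = d *s (\<Sum>k<dR. a (x k) *s y k)" .
      moreover have "u (d *s r) = d *s u r" using ue r(1) RW(1) unfolding is_endo_def by blast
      ultimately have "u r = (\<Sum>k<dR. a (x k) *s y k)" using d(2) by simp
      also have "\<dots> \<in> S"
      proof (rule Amod_sum[OF GS(5)])
        fix k assume k: "k \<in> {..<dR}"
        have "a (x k) \<in> A" using a(1) x(2) k by blast
        then show "a (x k) *s y k \<in> S" using Amod_scale_closed[OF GS(5)] ylt k by blast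
      qed
      finally show "q \<in> S" using r(2) by simp
    qed
    show ?thesis using detc ue uR by blast
  qed
  show ?thesis unfolding index_unfold W_def[symmetric] using all by blast
qed

end


theorem mainTheorem1:
  fixes A :: "'k::field set" and scale :: "'k \<Rightarrow> 'v::ab_group_add \<Rightarrow> 'v"
    and R S :: "'v set"
  assumes "dedekind_subring A"
    and "vector_space scale"
    and "A_lattice A scale R" and "R \<noteq> {0}"
    and "A_lattice A scale S"
  shows "(lat_dim scale R > lat_dim scale S \<longrightarrow> index_module scale R S = {0})
       \<and> (lat_dim scale R \<le> lat_dim scale S \<and> module.span scale S \<noteq> module.span scale R
           \<longrightarrow> index_module scale R S = UNIV)
       \<and> (\<forall>mR bR mS bS. module.span scale S = module.span scale R
           \<and> lattice_decomp A scale R mR bR \<and> lattice_decomp A scale S mS bS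
           \<longrightarrow> index_module scale R S =
                 (\<lambda>x. x * lz_det (lat_dim scale R) (coord_matrix scale (lat_dim scale R) bR bS))
                   ` mod_mult A mS (frac_inv A mR))"
proof -
  interpret V: vector_space scale by (rule assms(2))
  have sub: "is_subring A" using assms(1) unfolding dedekind_subring_def by blast
  show ?thesis
  proof (intro conjI impI allI)
    assume "lat_dim scale S < lat_dim scale R"
    then show "index_module scale R S = {0}" by (rule V.case1[OF assms(3,4,5)])
  next
    assume h: "lat_dim scale R \<le> lat_dim scale S \<and> module.span scale S \<noteq> module.span scale R"
    then show "index_module scale R S = UNIV" using V.case2[OF sub assms(3,4,5)] by blast
  next
    fix mR bR mS bS
    assume h: "module.span scale S = module.span scale R \<and> lattice_decomp A scale R mR bR \<and> lattice_decomp A scale S mS bS"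
    then show "index_module scale R S =
                 (\<lambda>x. x * lz_det (lat_dim scale R) (coord_matrix scale (lat_dim scale R) bR bS))
                   ` mod_mult A mS (frac_inv A mR)"
      using V.case3[OF assms(1,3,4,5)] by blast
  qed
qed

end
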